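(* Let $n\ge4$ be even, let $\gamma\in\mathbb{F}_4\setminus\mathbb{F}_2$, and let $F=\mathrm{Inv}\circ(0,1,\gamma)$ on $\mathbb{F}_{2^n}$. If $c\in\mathbb{F}_{2^n}\setminus\mathbb{F}_4$, then $3\le{}_c\Delta_F\le4$. Furthermore, ${}_c\Delta_F=3$ if $\mathrm{tr}(c\gamma)=\mathrm{tr}(c\gamma^2)=\mathrm{tr}(c^{-1}\gamma)=\mathrm{tr}(c^{-1}\gamma^2)=\mathrm{tr}\left(\frac{c}{(c+\gamma)^2}\right)=\mathrm{tr}\left(\frac{c\gamma^2}{(c+\gamma)^2}\right)=\mathrm{tr}\left(\frac{c\gamma}{(c+\gamma^2)^2}\right)=\mathrm{tr}\left(\frac{c}{(c+\gamma^2)^2}\right)=1$.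
   Context: $\mathbb{F}_4$ is the subfield of order $4$ of $\mathbb{F}_{2^n}$. $\mathrm{Inv}(x)=x^{2^n-2}$ on $\mathbb{F}_{2^n}$. $(0,1,\gamma)$ is the $3$-cycle sending $0\mapsto1$, $1\mapsto\gamma$, $\gamma\mapsto0$ and fixing all other elements; thus $F(0)=1$, $F(1)=\gamma^{-1}$, $F(\gamma)=0$ and $F(x)=x^{-1}$ otherwise. $\mathrm{tr}$ is the absolute trace $\mathbb{F}_{2^n}\to\mathbb{F}_2$. For $c\in\mathbb{F}_{2^n}$, ${}_cD_aF(x)=F(x+a)+cF(x)$; ${}_c\Delta_F(a,b)$ is the number of $x\in\mathbb{F}_{2^n}$ with ${}_cD_aF(x)=b$; and ${}_c\Delta_F=\max\{{}_c\Delta_F(a,b): a,b\in\mathbb{F}_{2^n},\ a\neq 0 \text{ if } c=1\}$. *)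

theory Defs
  imports Main
begin

text \<open>The field F_{2^n} is modelled as a finite field type 'a with CARD('a) = 2^n.
  Absolute trace F_{2^n} -> F_2 (values 0 or 1 inside the field).\<close>
definition tr :: "nat \<Rightarrow> 'a::field \<Rightarrow> 'a" where
  "tr n x = (\<Sum>i<n. x ^ (2 ^ i))"

text \<open>Inv composed with the 3-cycle (0,1,gamma); Inv(x) = x^(2^n-2) agrees with
  Isabelle's inverse (inverse 0 = 0).\<close>
definition invCycle :: "'a::field \<Rightarrow> 'a \<Rightarrow> 'a" where
  "invCycle \<gamma> x = (if x = 0 then 1 else if x = 1 then inverse \<gamma>
                    else if x = \<gamma> then 0 else inverse x)"

definition cDelta :: "('a::field \<Rightarrow> 'a) \<Rightarrow> 'a \<Rightarrow> 'a \<Rightarrow> 'a \<Rightarrow> nat" where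
  "cDelta F c a b = card {x. F (x + a) + c * F x = b}"

definition cDU :: "('a::{field,finite} \<Rightarrow> 'a) \<Rightarrow> 'a \<Rightarrow> nat" where
  "cDU F c = Max {cDelta F c a b | a b. a \<noteq> 0 \<or> c \<noteq> 1}"

end

theory Submission imports Defs "HOL-Number_Theory.Residues" begin

locale c2field =
  fixes n :: nat and \<gamma> c :: "'a::{field,finite}"
  assumes card: "card (UNIV::'a set) = 2^n" and ev: "even n"
    and two: "(2::'a) = 0" and gg: "\<gamma>*\<gamma> = \<gamma> + 1"
    and c0: "c \<noteq> 0" and c1: "c \<noteq> 1" and cg: "c \<noteq> \<gamma>" and cg1: "c \<noteq> \<gamma> + 1"
begin

lemma c2_Bit0: "(numeral (num.Bit0 k) :: 'a) = 0"
  by (metis mult_2 mult_zero_left numeral_Bit0 two)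
lemma c2_Bit1: "(numeral (num.Bit1 k) :: 'a) = 1"
  by (metis numeral_Bit0 numeral_Bit1 c2_Bit0 add_0)
lemma c2_xx: "(x::'a) + x = 0"
  by (metis mult_2 mult_zero_left two)
lemma c2_neg: "- (x::'a) = x"
  by (rule minus_unique[OF c2_xx])
lemma c2_minus: "(x::'a) - y = x + y"
  by (metis c2_neg diff_conv_add_uminus)
lemma c2_eq: "((x::'a) = y) = (x + y = 0)"
  by (metis add_eq_0_iff c2_neg)
lemma g_sq: "\<gamma>*(\<gamma>*x) = \<gamma>*x + x"
  by (metis gg mult.assoc distrib_right mult_1)
lemmas ns = c2_Bit0 c2_Bit1 c2_neg c2_minus algebra_simps eval_nat_numeral gg g_sq

lemma g0: "\<gamma> \<noteq> 0" using gg by auto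
lemma g1: "\<gamma> \<noteq> 1" using gg two by auto
lemma g2: "\<gamma> + 1 \<noteq> 0" using g1 c2_eq by auto
lemma inv_g: "inverse \<gamma> = \<gamma> + 1"
  using g0 by (simp add: field_simps ns)

lemma frob: "((x::'a) + y)^2 = x^2 + y^2"
  by (simp add: ns)
lemma frob_pow: "((x::'a) + y)^(2^i) = x^(2^i) + y^(2^i)"
proof (induction i)
  case (Suc i)
  have "(x+y)^(2^Suc i) = ((x+y)^(2^i))^2" by (simp add: power_mult[symmetric] mult.commute)
  also have "\<dots> = (x^(2^i))^2 + (y^(2^i))^2" using Suc frob by simp
  also have "\<dots> = x^(2^Suc i) + y^(2^Suc i)" by (simp add: power_mult[symmetric] mult.commute)
  finally show ?case .
qed simp

lemma tr_add: "tr n ((x::'a) + y) = tr n x + tr n y"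
  unfolding tr_def by (simp add: frob_pow sum.distrib)
lemma tr_one: "tr n (1::'a) = 0"
proof -
  obtain k where "n = 2*k" using ev by blast
  hence "tr n (1::'a) = of_nat (2*k)" unfolding tr_def by simp
  also have "\<dots> = 0" by (simp add: two)
  finally show ?thesis .
qed

lemma pow_card: "(x::'a) ^ (2^n) = x"
proof (cases "x = 0")
  case False
  have "x * (\<Prod>y\<in>UNIV-{0}. x * y) = x * x ^ (card (UNIV :: 'a set) - 1) * \<Prod>(UNIV-{0})"
    by (simp add: prod.distrib mult_ac)
  also have "x * x ^ (card (UNIV :: 'a set) - 1) = x ^ Suc (card (UNIV :: 'a set) - 1)"
    by (subst power_Suc) auto
  also have "Suc (card (UNIV :: 'a set) - 1) = card (UNIV :: 'a set)"
    using finite_UNIV_card_ge_0[where ?'a = 'a] by simp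
  also have "(\<Prod>y\<in>UNIV-{0}. x * y) = (\<Prod>y\<in>UNIV-{0}. y)"
    by (rule prod.reindex_bij_witness[of _ "\<lambda>y. y / x" "\<lambda>y. x * y"]) (use False in auto)
  finally show ?thesis
    using card by simp
qed simp

lemma tr_AS: "tr n ((w::'a)^2 + w) = 0"
proof -
  have "tr n (w^2 + w) = (\<Sum>i<n. w^(2^Suc i) - w^(2^i))"
    unfolding tr_def by (simp add: frob_pow c2_minus power_mult[symmetric] mult.commute)
  also have "\<dots> = w^(2^n) - w^(2^0)" by (rule sum_lessThan_telescope)
  also have "\<dots> = 0" by (simp add: pow_card)
  finally show ?thesis .
qed

lemma AS_quad:
  fixes A B C a :: 'a
  assumes "A*a^2 + B*a + C = 0" "B \<noteq> 0"
  shows "tr n (A*C/B^2) = 0"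
proof -
  have "C = A*a^2 + B*a" using assms(1) c2_eq by (metis add.commute)
  hence "A*C/B^2 = (A*a/B)^2 + A*a/B" using assms(2)
    by (simp add: field_simps power2_eq_square)
  thus ?thesis using tr_AS by simp
qed

lemma tr_from:
  fixes A B C a E :: 'a
  assumes "A*a^2 + B*a + C = 0" "B \<noteq> 0" "A*C/B^2 = E"
  shows "tr n E = 0"
  using AS_quad[OF assms(1,2)] assms(3) by simp
lemma tr_from1:
  fixes A B C a E :: 'a
  assumes "A*a^2 + B*a + C = 0" "B \<noteq> 0" "A*C/B^2 = E + 1"
  shows "tr n E = 0"
  using AS_quad[OF assms(1,2)] assms(3) by (simp add: tr_add tr_one)


lemma c2_solve: "(x::'a) + y = z \<Longrightarrow> y = x + z"
  by (metis add.assoc add.commute c2_xx add_0)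

lemma c2_solve2: "(x::'a) + y = z \<Longrightarrow> x = y + z"
  by (metis add.assoc add.commute c2_xx add_0)

lemma gsq: "\<gamma>^2 = \<gamma> + 1" using gg by (simp add: power2_eq_square)
lemma g3: "\<gamma>^3 = 1" by (simp add: ns)

lemma nz1: "c + \<gamma> \<noteq> 0" using cg c2_eq by blast
lemma nz2: "c + \<gamma>^2 \<noteq> 0" using cg1 c2_eq gsq by metis
lemma nz3: "1 + c*\<gamma>^2 \<noteq> 0"
proof
  assume "1 + c*\<gamma>^2 = 0"
  hence "\<gamma>*(1 + c*\<gamma>^2) = 0" by simp
  moreover have "\<gamma>*(1 + c*\<gamma>^2) = c + \<gamma>" by (simp add: ns)
  ultimately show False using nz1 by simp
qed
lemma nz4: "c*\<gamma>^2 + 1 \<noteq> 0" using nz3 by (simp add: add.commute)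
lemma nz5: "\<gamma>^2 + c \<noteq> 0" using nz2 by (simp add: add.commute)
lemma nz6: "\<gamma> + c \<noteq> 0" using nz1 by (simp add: add.commute)
lemmas nzf = nz1 nz2 nz3 nz4 nz5 nz6 c0 g0

lemma pair_poly:
  fixes vs vt ia ib ds dt k cs ct P :: 'a
  assumes "vs = vt" "ia*ds = 1" "ib*dt = 1"
    "P = k*((vs+vt)*(ds*dt) + cs*dt*(ia*ds+1) + ct*ds*(ib*dt+1))"
  shows "P = 0"
  using assms by (simp add: c2_xx)

lemma F0: "invCycle \<gamma> 0 = 1" by (simp add: invCycle_def)
lemma F1: "invCycle \<gamma> 1 = \<gamma> + 1" by (simp add: invCycle_def inv_g)
lemma Fg: "invCycle \<gamma> \<gamma> = 0" using g0 g1 by (simp add: invCycle_def)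
lemma Fgen: "x \<notin> {0,1,\<gamma>} \<Longrightarrow> invCycle \<gamma> x = inverse x" by (simp add: invCycle_def)

definition G where "G a x = invCycle \<gamma> (x + a) + c * invCycle \<gamma> x"

lemma na_facts:
  assumes "a \<notin> {0,1,\<gamma>,\<gamma>+1}"
  shows "a \<noteq> 0" "a + 1 \<noteq> 0" "a + \<gamma> \<noteq> 0" "a \<notin> {0,1,\<gamma>}" "a + 1 \<notin> {0,1,\<gamma>}" "a + \<gamma> \<notin> {0,1,\<gamma>}"
    "1 + a \<notin> {0,1,\<gamma>}" "\<gamma> + a \<notin> {0,1,\<gamma>}"
  using assms c2_solve[of a 1 0] c2_solve[of a 1 1] c2_solve[of a 1 \<gamma>] c2_solve[of a \<gamma> 0]
    c2_solve[of a \<gamma> 1] c2_solve[of a \<gamma> \<gamma>]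
  by (auto simp: add.commute c2_xx)

lemma add_cancel2: "(a::'a) + b + a = b" by (simp add: ns)

lemma V0: "a \<notin> {0,1,\<gamma>,\<gamma>+1} \<Longrightarrow> G a 0 = inverse a + c"
  using na_facts[of a] by (simp add: G_def F0 Fgen)
lemma V1: "a \<notin> {0,1,\<gamma>,\<gamma>+1} \<Longrightarrow> G a 1 = inverse (a+1) + c*(\<gamma>+1)"
  using na_facts[of a] by (simp add: G_def F1 Fgen add.commute)
lemma Vg: "a \<notin> {0,1,\<gamma>,\<gamma>+1} \<Longrightarrow> G a \<gamma> = inverse (a+\<gamma>)"
  using na_facts[of a] by (simp add: G_def Fg Fgen add.commute)
lemma Va: "a \<notin> {0,1,\<gamma>,\<gamma>+1} \<Longrightarrow> G a a = 1 + c*inverse a"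
  using na_facts[of a] by (simp add: G_def F0 Fgen c2_xx)
lemma Va1: "a \<notin> {0,1,\<gamma>,\<gamma>+1} \<Longrightarrow> G a (a+1) = (\<gamma>+1) + c*inverse (a+1)"
  using na_facts[of a] by (simp add: G_def F1 Fgen add_cancel2)
lemma Vag: "a \<notin> {0,1,\<gamma>,\<gamma>+1} \<Longrightarrow> G a (a+\<gamma>) = c*inverse (a+\<gamma>)"
  using na_facts[of a] by (simp add: G_def Fg Fgen add_cancel2)

lemma q_0_1:
  assumes na: "a \<notin> {0,1,\<gamma>,\<gamma>+1}" and e: "G a 0 = G a 1"
  shows "c*a^2 + c*a + \<gamma>^2 = 0"
proof (rule pair_poly[where vs="inverse a + c" and vt="inverse (a+1) + c*(\<gamma>+1)" and ia="inverse a" and ds="a" and ib="inverse (a+1)" and dt="a+1" and k="\<gamma>^2" and cs="1" and ct="1"])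
  show "inverse a + c = inverse (a+1) + c*(\<gamma>+1)" using e na by (simp add: V0 V1)
  show "inverse a * (a) = 1" "inverse (a+1) * (a+1) = 1" using na_facts[OF na] by simp_all
  show "c*a^2 + c*a + \<gamma>^2 = \<gamma>^2*((inverse a + c + (inverse (a+1) + c*(\<gamma>+1)))*((a)*(a+1)) + 1*(a+1)*(inverse a*(a)+1) + 1*(a)*(inverse (a+1)*(a+1)+1))"
    by (simp add: ns)
qed
lemma t_0_1:
  assumes na: "a \<notin> {0,1,\<gamma>,\<gamma>+1}" and e: "G a 0 = G a 1"
  shows "tr n (inverse c * \<gamma>^2) = 0"
  apply (rule tr_from[OF q_0_1[OF na e]])
  subgoal using nzf by simp
  subgoal using nzf by (simp add: field_simps, (simp add: ns)?)
  done

lemma q_0_g: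
  assumes na: "a \<notin> {0,1,\<gamma>,\<gamma>+1}" and e: "G a 0 = G a \<gamma>"
  shows "c*a^2 + c*\<gamma>*a + \<gamma> = 0"
proof (rule pair_poly[where vs="inverse a + c" and vt="inverse (a+\<gamma>)" and ia="inverse a" and ds="a" and ib="inverse (a+\<gamma>)" and dt="a+\<gamma>" and k="1" and cs="1" and ct="1"])
  show "inverse a + c = inverse (a+\<gamma>)" using e na by (simp add: V0 Vg)
  show "inverse a * (a) = 1" "inverse (a+\<gamma>) * (a+\<gamma>) = 1" using na_facts[OF na] by simp_all
  show "c*a^2 + c*\<gamma>*a + \<gamma> = 1*((inverse a + c + (inverse (a+\<gamma>)))*((a)*(a+\<gamma>)) + 1*(a+\<gamma>)*(inverse a*(a)+1) + 1*(a)*(inverse (a+\<gamma>)*(a+\<gamma>)+1))"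
    by (simp add: ns)
qed
lemma t_0_g:
  assumes na: "a \<notin> {0,1,\<gamma>,\<gamma>+1}" and e: "G a 0 = G a \<gamma>"
  shows "tr n (inverse c * \<gamma>^2) = 0"
  apply (rule tr_from[OF q_0_g[OF na e]])
  subgoal using nzf by simp
  subgoal using nzf by (simp add: field_simps, (simp add: ns)?)
  done

lemma q_0_a1:
  assumes na: "a \<notin> {0,1,\<gamma>,\<gamma>+1}" and e: "G a 0 = G a (a+1)"
  shows "(c+\<gamma>^2)*a^2 + \<gamma>*a + 1 = 0"
proof (rule pair_poly[where vs="inverse a + c" and vt="(\<gamma>+1) + c*inverse (a+1)" and ia="inverse a" and ds="a" and ib="inverse (a+1)" and dt="a+1" and k="1" and cs="1" and ct="c"])
  show "inverse a + c = (\<gamma>+1) + c*inverse (a+1)" using e na by (simp add: V0 Va1)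
  show "inverse a * (a) = 1" "inverse (a+1) * (a+1) = 1" using na_facts[OF na] by simp_all
  show "(c+\<gamma>^2)*a^2 + \<gamma>*a + 1 = 1*((inverse a + c + ((\<gamma>+1) + c*inverse (a+1)))*((a)*(a+1)) + 1*(a+1)*(inverse a*(a)+1) + c*(a)*(inverse (a+1)*(a+1)+1))"
    by (simp add: ns)
qed
lemma t_0_a1:
  assumes na: "a \<notin> {0,1,\<gamma>,\<gamma>+1}" and e: "G a 0 = G a (a+1)"
  shows "tr n (c * \<gamma>) = 0"
  apply (rule tr_from1[OF q_0_a1[OF na e]])
  subgoal using nzf by simp
  subgoal using nzf by (simp add: field_simps, (simp add: ns)?)
  done

lemma q_0_ag:
  assumes na: "a \<notin> {0,1,\<gamma>,\<gamma>+1}" and e: "G a 0 = G a (a+\<gamma>)"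
  shows "c*a^2 + (1+c*\<gamma>^2)*a + \<gamma> = 0"
proof (rule pair_poly[where vs="inverse a + c" and vt="c*inverse (a+\<gamma>)" and ia="inverse a" and ds="a" and ib="inverse (a+\<gamma>)" and dt="a+\<gamma>" and k="1" and cs="1" and ct="c"])
  show "inverse a + c = c*inverse (a+\<gamma>)" using e na by (simp add: V0 Vag)
  show "inverse a * (a) = 1" "inverse (a+\<gamma>) * (a+\<gamma>) = 1" using na_facts[OF na] by simp_all
  show "c*a^2 + (1+c*\<gamma>^2)*a + \<gamma> = 1*((inverse a + c + (c*inverse (a+\<gamma>)))*((a)*(a+\<gamma>)) + 1*(a+\<gamma>)*(inverse a*(a)+1) + c*(a)*(inverse (a+\<gamma>)*(a+\<gamma>)+1))"
    by (simp add: ns)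
qed
lemma t_0_ag:
  assumes na: "a \<notin> {0,1,\<gamma>,\<gamma>+1}" and e: "G a 0 = G a (a+\<gamma>)"
  shows "tr n (c / (c + \<gamma>)^2) = 0"
  apply (rule tr_from[OF q_0_ag[OF na e]])
  subgoal using nzf by simp
  subgoal using nzf by (simp add: field_simps, (simp add: ns)?)
  done

lemma q_1_g:
  assumes na: "a \<notin> {0,1,\<gamma>,\<gamma>+1}" and e: "G a 1 = G a \<gamma>"
  shows "c*a^2 + c*\<gamma>^2*a + (c*\<gamma>+1) = 0"
proof (rule pair_poly[where vs="inverse (a+1) + c*(\<gamma>+1)" and vt="inverse (a+\<gamma>)" and ia="inverse (a+1)" and ds="a+1" and ib="inverse (a+\<gamma>)" and dt="a+\<gamma>" and k="\<gamma>" and cs="1" and ct="1"])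
  show "inverse (a+1) + c*(\<gamma>+1) = inverse (a+\<gamma>)" using e na by (simp add: V1 Vg)
  show "inverse (a+1) * (a+1) = 1" "inverse (a+\<gamma>) * (a+\<gamma>) = 1" using na_facts[OF na] by simp_all
  show "c*a^2 + c*\<gamma>^2*a + (c*\<gamma>+1) = \<gamma>*((inverse (a+1) + c*(\<gamma>+1) + (inverse (a+\<gamma>)))*((a+1)*(a+\<gamma>)) + 1*(a+\<gamma>)*(inverse (a+1)*(a+1)+1) + 1*(a+1)*(inverse (a+\<gamma>)*(a+\<gamma>)+1))"
    by (simp add: ns)
qed
lemma t_1_g:
  assumes na: "a \<notin> {0,1,\<gamma>,\<gamma>+1}" and e: "G a 1 = G a \<gamma>"
  shows "tr n (inverse c * \<gamma>^2) = 0"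
  apply (rule tr_from1[OF q_1_g[OF na e]])
  subgoal using nzf by simp
  subgoal using nzf by (simp add: field_simps, (simp add: ns)?)
  done

lemma q_1_a:
  assumes na: "a \<notin> {0,1,\<gamma>,\<gamma>+1}" and e: "G a 1 = G a a"
  shows "(c*\<gamma>^2+1)*a^2 + c*\<gamma>*a + c = 0"
proof (rule pair_poly[where vs="inverse (a+1) + c*(\<gamma>+1)" and vt="1 + c*inverse a" and ia="inverse (a+1)" and ds="a+1" and ib="inverse a" and dt="a" and k="1" and cs="1" and ct="c"])
  show "inverse (a+1) + c*(\<gamma>+1) = 1 + c*inverse a" using e na by (simp add: V1 Va)
  show "inverse (a+1) * (a+1) = 1" "inverse a * (a) = 1" using na_facts[OF na] by simp_all
  show "(c*\<gamma>^2+1)*a^2 + c*\<gamma>*a + c = 1*((inverse (a+1) + c*(\<gamma>+1) + (1 + c*inverse a))*((a+1)*(a)) + 1*(a)*(inverse (a+1)*(a+1)+1) + c*(a+1)*(inverse a*(a)+1))"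
    by (simp add: ns)
qed
lemma t_1_a:
  assumes na: "a \<notin> {0,1,\<gamma>,\<gamma>+1}" and e: "G a 1 = G a a"
  shows "tr n (inverse c * \<gamma>) = 0"
  apply (rule tr_from1[OF q_1_a[OF na e]])
  subgoal using nzf by simp
  subgoal using nzf by (simp add: field_simps, (simp add: ns)?)
  done

lemma q_1_ag:
  assumes na: "a \<notin> {0,1,\<gamma>,\<gamma>+1}" and e: "G a 1 = G a (a+\<gamma>)"
  shows "c*\<gamma>^2*a^2 + (1+c*\<gamma>^2)*a + \<gamma> = 0"
proof (rule pair_poly[where vs="inverse (a+1) + c*(\<gamma>+1)" and vt="c*inverse (a+\<gamma>)" and ia="inverse (a+1)" and ds="a+1" and ib="inverse (a+\<gamma>)" and dt="a+\<gamma>" and k="1" and cs="1" and ct="c"])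
  show "inverse (a+1) + c*(\<gamma>+1) = c*inverse (a+\<gamma>)" using e na by (simp add: V1 Vag)
  show "inverse (a+1) * (a+1) = 1" "inverse (a+\<gamma>) * (a+\<gamma>) = 1" using na_facts[OF na] by simp_all
  show "c*\<gamma>^2*a^2 + (1+c*\<gamma>^2)*a + \<gamma> = 1*((inverse (a+1) + c*(\<gamma>+1) + (c*inverse (a+\<gamma>)))*((a+1)*(a+\<gamma>)) + 1*(a+\<gamma>)*(inverse (a+1)*(a+1)+1) + c*(a+1)*(inverse (a+\<gamma>)*(a+\<gamma>)+1))"
    by (simp add: ns)
qed
lemma t_1_ag:
  assumes na: "a \<notin> {0,1,\<gamma>,\<gamma>+1}" and e: "G a 1 = G a (a+\<gamma>)"
  shows "tr n (c * \<gamma>^2 / (c + \<gamma>)^2) = 0"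
  apply (rule tr_from[OF q_1_ag[OF na e]])
  subgoal using nzf by simp
  subgoal using nzf by (simp add: field_simps, (simp add: ns)?)
  done

lemma q_g_a:
  assumes na: "a \<notin> {0,1,\<gamma>,\<gamma>+1}" and e: "G a \<gamma> = G a a"
  shows "1*a^2 + (\<gamma>^2+c)*a + c*\<gamma> = 0"
proof (rule pair_poly[where vs="inverse (a+\<gamma>)" and vt="1 + c*inverse a" and ia="inverse (a+\<gamma>)" and ds="a+\<gamma>" and ib="inverse a" and dt="a" and k="1" and cs="1" and ct="c"])
  show "inverse (a+\<gamma>) = 1 + c*inverse a" using e na by (simp add: Vg Va)
  show "inverse (a+\<gamma>) * (a+\<gamma>) = 1" "inverse a * (a) = 1" using na_facts[OF na] by simp_all
  show "1*a^2 + (\<gamma>^2+c)*a + c*\<gamma> = 1*((inverse (a+\<gamma>) + (1 + c*inverse a))*((a+\<gamma>)*(a)) + 1*(a)*(inverse (a+\<gamma>)*(a+\<gamma>)+1) + c*(a+\<gamma>)*(inverse a*(a)+1))"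
    by (simp add: ns)
qed
lemma t_g_a:
  assumes na: "a \<notin> {0,1,\<gamma>,\<gamma>+1}" and e: "G a \<gamma> = G a a"
  shows "tr n (c * \<gamma> / (c + \<gamma>^2)^2) = 0"
  apply (rule tr_from[OF q_g_a[OF na e]])
  subgoal using nzf by simp
  subgoal using nzf by (simp add: field_simps, (simp add: ns)?)
  done

lemma q_g_a1:
  assumes na: "a \<notin> {0,1,\<gamma>,\<gamma>+1}" and e: "G a \<gamma> = G a (a+1)"
  shows "\<gamma>^2*a^2 + (\<gamma>^2+c)*a + c*\<gamma> = 0"
proof (rule pair_poly[where vs="inverse (a+\<gamma>)" and vt="(\<gamma>+1) + c*inverse (a+1)" and ia="inverse (a+\<gamma>)" and ds="a+\<gamma>" and ib="inverse (a+1)" and dt="a+1" and k="1" and cs="1" and ct="c"])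
  show "inverse (a+\<gamma>) = (\<gamma>+1) + c*inverse (a+1)" using e na by (simp add: Vg Va1)
  show "inverse (a+\<gamma>) * (a+\<gamma>) = 1" "inverse (a+1) * (a+1) = 1" using na_facts[OF na] by simp_all
  show "\<gamma>^2*a^2 + (\<gamma>^2+c)*a + c*\<gamma> = 1*((inverse (a+\<gamma>) + ((\<gamma>+1) + c*inverse (a+1)))*((a+\<gamma>)*(a+1)) + 1*(a+1)*(inverse (a+\<gamma>)*(a+\<gamma>)+1) + c*(a+\<gamma>)*(inverse (a+1)*(a+1)+1))"
    by (simp add: ns)
qed
lemma t_g_a1:
  assumes na: "a \<notin> {0,1,\<gamma>,\<gamma>+1}" and e: "G a \<gamma> = G a (a+1)"
  shows "tr n (c / (c + \<gamma>^2)^2) = 0"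
  apply (rule tr_from[OF q_g_a1[OF na e]])
  subgoal using nzf by simp
  subgoal using nzf by (simp add: field_simps, (simp add: ns)?)
  done

lemma q_a_a1:
  assumes na: "a \<notin> {0,1,\<gamma>,\<gamma>+1}" and e: "G a a = G a (a+1)"
  shows "1*a^2 + 1*a + c*\<gamma>^2 = 0"
proof (rule pair_poly[where vs="1 + c*inverse a" and vt="(\<gamma>+1) + c*inverse (a+1)" and ia="inverse a" and ds="a" and ib="inverse (a+1)" and dt="a+1" and k="\<gamma>^2" and cs="c" and ct="c"])
  show "1 + c*inverse a = (\<gamma>+1) + c*inverse (a+1)" using e na by (simp add: Va Va1)
  show "inverse a * (a) = 1" "inverse (a+1) * (a+1) = 1" using na_facts[OF na] by simp_all
  show "1*a^2 + 1*a + c*\<gamma>^2 = \<gamma>^2*((1 + c*inverse a + ((\<gamma>+1) + c*inverse (a+1)))*((a)*(a+1)) + c*(a+1)*(inverse a*(a)+1) + c*(a)*(inverse (a+1)*(a+1)+1))"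
    by (simp add: ns)
qed
lemma t_a_a1:
  assumes na: "a \<notin> {0,1,\<gamma>,\<gamma>+1}" and e: "G a a = G a (a+1)"
  shows "tr n (c * \<gamma>^2) = 0"
  apply (rule tr_from[OF q_a_a1[OF na e]])
  subgoal using nzf by simp
  subgoal using nzf by (simp add: field_simps, (simp add: ns)?)
  done

lemma q_a_ag:
  assumes na: "a \<notin> {0,1,\<gamma>,\<gamma>+1}" and e: "G a a = G a (a+\<gamma>)"
  shows "1*a^2 + \<gamma>*a + c*\<gamma> = 0"
proof (rule pair_poly[where vs="1 + c*inverse a" and vt="c*inverse (a+\<gamma>)" and ia="inverse a" and ds="a" and ib="inverse (a+\<gamma>)" and dt="a+\<gamma>" and k="1" and cs="c" and ct="c"])
  show "1 + c*inverse a = c*inverse (a+\<gamma>)" using e na by (simp add: Va Vag)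
  show "inverse a * (a) = 1" "inverse (a+\<gamma>) * (a+\<gamma>) = 1" using na_facts[OF na] by simp_all
  show "1*a^2 + \<gamma>*a + c*\<gamma> = 1*((1 + c*inverse a + (c*inverse (a+\<gamma>)))*((a)*(a+\<gamma>)) + c*(a+\<gamma>)*(inverse a*(a)+1) + c*(a)*(inverse (a+\<gamma>)*(a+\<gamma>)+1))"
    by (simp add: ns)
qed
lemma t_a_ag:
  assumes na: "a \<notin> {0,1,\<gamma>,\<gamma>+1}" and e: "G a a = G a (a+\<gamma>)"
  shows "tr n (c * \<gamma>^2) = 0"
  apply (rule tr_from[OF q_a_ag[OF na e]])
  subgoal using nzf by simp
  subgoal using nzf by (simp add: field_simps, (simp add: ns)?)
  done

lemma q_a1_ag:
  assumes na: "a \<notin> {0,1,\<gamma>,\<gamma>+1}" and e: "G a (a+1) = G a (a+\<gamma>)"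
  shows "1*a^2 + \<gamma>^2*a + (\<gamma>+c) = 0"
proof (rule pair_poly[where vs="(\<gamma>+1) + c*inverse (a+1)" and vt="c*inverse (a+\<gamma>)" and ia="inverse (a+1)" and ds="a+1" and ib="inverse (a+\<gamma>)" and dt="a+\<gamma>" and k="\<gamma>" and cs="c" and ct="c"])
  show "(\<gamma>+1) + c*inverse (a+1) = c*inverse (a+\<gamma>)" using e na by (simp add: Va1 Vag)
  show "inverse (a+1) * (a+1) = 1" "inverse (a+\<gamma>) * (a+\<gamma>) = 1" using na_facts[OF na] by simp_all
  show "1*a^2 + \<gamma>^2*a + (\<gamma>+c) = \<gamma>*(((\<gamma>+1) + c*inverse (a+1) + (c*inverse (a+\<gamma>)))*((a+1)*(a+\<gamma>)) + c*(a+\<gamma>)*(inverse (a+1)*(a+1)+1) + c*(a+1)*(inverse (a+\<gamma>)*(a+\<gamma>)+1))"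
    by (simp add: ns)
qed
lemma t_a1_ag:
  assumes na: "a \<notin> {0,1,\<gamma>,\<gamma>+1}" and e: "G a (a+1) = G a (a+\<gamma>)"
  shows "tr n (c * \<gamma>^2) = 0"
  apply (rule tr_from1[OF q_a1_ag[OF na e]])
  subgoal using nzf by simp
  subgoal using nzf by (simp add: field_simps, (simp add: ns)?)
  done


lemma fnz1: "c + 1 \<noteq> 0" using c1 c2_eq by blast
lemma fnz2: "c + \<gamma> + 1 \<noteq> 0" using cg1 c2_eq by (metis add.assoc)
lemma fnz3: "1 + c \<noteq> 0" using fnz1 by (simp add: add.commute)
lemma fnz4: "1 + \<gamma> \<noteq> 0" using g2 by (simp add: add.commute)
lemma fnz5: "1 + (c + \<gamma>) \<noteq> 0" using fnz2 by (simp add: ac_simps)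
lemma fnz6: "c + (1 + \<gamma>) \<noteq> 0" using fnz2 by (simp add: ac_simps)
lemma fnz7: "\<gamma> + (1 + c) \<noteq> 0" using fnz2 by (simp add: ac_simps)
lemmas fnz = c0 fnz1 nz1 fnz2 g0 g2 fnz3 fnz4 fnz5 fnz6 fnz7 nz6

lemma tri_gen:
  fixes Ai Bi Ci Aj Bj Cj a :: 'a
  assumes qi: "Ai*a^2+Bi*a+Ci = 0" and qj: "Aj*a^2+Bj*a+Cj = 0"
  shows "Ai*(Aj*Ci+Ai*Cj)^2 + Bi*(Aj*Bi+Ai*Bj)*(Aj*Ci+Ai*Cj) + Ci*(Aj*Bi+Ai*Bj)^2 = 0"
proof -
  have "(Aj*Bi+Ai*Bj)*a + (Aj*Ci+Ai*Cj) = Aj*(Ai*a^2+Bi*a+Ci) + Ai*(Aj*a^2+Bj*a+Cj)"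
    by (simp add: ns)
  hence L: "(Aj*Bi+Ai*Bj)*a + (Aj*Ci+Ai*Cj) = 0" using qi qj by simp
  have "Ai*(Aj*Ci+Ai*Cj)^2 + Bi*(Aj*Bi+Ai*Bj)*(Aj*Ci+Ai*Cj) + Ci*(Aj*Bi+Ai*Bj)^2
     = (Aj*Bi+Ai*Bj)^2*(Ai*a^2+Bi*a+Ci) + ((Aj*Bi+Ai*Bj)*a + (Aj*Ci+Ai*Cj))*(Ai*((Aj*Bi+Ai*Bj)*a + (Aj*Ci+Ai*Cj)) + Bi*(Aj*Bi+Ai*Bj))"
    by (simp add: ns)
  thus ?thesis using qi L by simp
qed

lemma ex_0_a:
  assumes na: "a \<notin> {0,1,\<gamma>,\<gamma>+1}" and "G a 0 = b" "G a a = b"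
  shows False
proof -
  have "(1+c)*(a+1) = 0"
  proof (rule pair_poly[where vs="inverse a + c" and vt="1 + c*inverse a" and ia="inverse a" and ds=a and ib=1 and dt=1 and k=1 and cs="1+c" and ct=0])
    show "inverse a + c = 1 + c*inverse a" using assms by (simp add: V0 Va)
    show "inverse a * a = 1" "1 * 1 = (1::'a)" using na_facts[OF na] by simp_all
    show "(1+c)*(a+1) = 1*((inverse a + c + (1 + c*inverse a))*(a*1) + (1+c)*1*(inverse a*a+1) + 0*a*(1*1+1))"
      by (simp add: ns)
  qed
  thus False using fnz1 na_facts[OF na] by (simp add: add.commute)
qed

lemma ex_1_a1:
  assumes na: "a \<notin> {0,1,\<gamma>,\<gamma>+1}" and "G a 1 = b" "G a (a+1) = b"
  shows False
proof -
  have "(1+c)*((\<gamma>+1)*a+\<gamma>) = 0"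
  proof (rule pair_poly[where vs="inverse (a+1) + c*(\<gamma>+1)" and vt="(\<gamma>+1) + c*inverse (a+1)" and ia="inverse (a+1)" and ds="a+1" and ib=1 and dt=1 and k=1 and cs="1+c" and ct=0])
    show "inverse (a+1) + c*(\<gamma>+1) = (\<gamma>+1) + c*inverse (a+1)" using assms by (simp add: V1 Va1)
    show "inverse (a+1) * (a+1) = 1" "1 * 1 = (1::'a)" using na_facts[OF na] by simp_all
    show "(1+c)*((\<gamma>+1)*a+\<gamma>) = 1*((inverse (a+1) + c*(\<gamma>+1) + ((\<gamma>+1) + c*inverse (a+1)))*((a+1)*1) + (1+c)*1*(inverse (a+1)*(a+1)+1) + 0*(a+1)*(1*1+1))"
      by (simp add: ns)
  qed
  hence X: "(\<gamma>+1)*a+\<gamma> = 0" using fnz1 by (simp add: add.commute)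
  have "a = \<gamma>*((\<gamma>+1)*a+\<gamma>) + \<gamma> + 1" by (simp add: ns)
  hence "a = \<gamma> + 1" using X by simp
  thus False using na by simp
qed

lemma ex_g_ag:
  assumes na: "a \<notin> {0,1,\<gamma>,\<gamma>+1}" and "G a \<gamma> = b" "G a (a+\<gamma>) = b"
  shows False
proof -
  have "1+c = (0::'a)"
  proof (rule pair_poly[where vs="inverse (a+\<gamma>)" and vt="c*inverse (a+\<gamma>)" and ia="inverse (a+\<gamma>)" and ds="a+\<gamma>" and ib=1 and dt=1 and k=1 and cs="1+c" and ct=0])
    show "inverse (a+\<gamma>) = c*inverse (a+\<gamma>)" using assms by (simp add: Vg Vag)
    show "inverse (a+\<gamma>) * (a+\<gamma>) = 1" "1 * 1 = (1::'a)" using na_facts[OF na] by simp_all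
    show "1+c = 1*((inverse (a+\<gamma>) + c*inverse (a+\<gamma>))*((a+\<gamma>)*1) + (1+c)*1*(inverse (a+\<gamma>)*(a+\<gamma>)+1) + 0*(a+\<gamma>)*(1*1+1))"
      by (simp add: ns)
  qed
  thus False using fnz1 by (simp add: add.commute)
qed

lemma tri_0_1_g:
  assumes na: "a \<notin> {0,1,\<gamma>,\<gamma>+1}" and "G a 0 = b" "G a 1 = b" "G a \<gamma> = b"
  shows False
proof -
  have qi: "c*a^2 + c*a + \<gamma>^2 = 0" by (rule q_0_1[OF na]) (use assms in simp)
  have qj: "c*a^2 + c*\<gamma>*a + \<gamma> = 0" by (rule q_0_g[OF na]) (use assms in simp)
  have "(c)*((c)*(\<gamma>^2)+(c)*(\<gamma>))^2 + (c)*((c)*(c)+(c)*(c*\<gamma>))*((c)*(\<gamma>^2)+(c)*(\<gamma>)) + (\<gamma>^2)*((c)*(c)+(c)*(c*\<gamma>))^2 = 0" by (rule tri_gen[OF qi qj])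
  moreover have "(\<gamma>) * c * c * c * (c+\<gamma>+1) = (c)*((c)*(\<gamma>^2)+(c)*(\<gamma>))^2 + (c)*((c)*(c)+(c)*(c*\<gamma>))*((c)*(\<gamma>^2)+(c)*(\<gamma>)) + (\<gamma>^2)*((c)*(c)+(c)*(c*\<gamma>))^2" by (simp add: ns)
  ultimately have "(\<gamma>) * c * c * c * (c+\<gamma>+1) = 0" by simp
  thus False using fnz by simp
qed

lemma tri_0_1_ag:
  assumes na: "a \<notin> {0,1,\<gamma>,\<gamma>+1}" and "G a 0 = b" "G a 1 = b" "G a (a+\<gamma>) = b"
  shows False
proof -
  have qi: "c*a^2 + c*a + \<gamma>^2 = 0" by (rule q_0_1[OF na]) (use assms in simp)
  have qj: "c*a^2 + (1+c*\<gamma>^2)*a + \<gamma> = 0" by (rule q_0_ag[OF na]) (use assms in simp)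
  have "(c)*((c)*(\<gamma>^2)+(c)*(\<gamma>))^2 + (c)*((c)*(c)+(c)*((1+c*\<gamma>^2)))*((c)*(\<gamma>^2)+(c)*(\<gamma>)) + (\<gamma>^2)*((c)*(c)+(c)*((1+c*\<gamma>^2)))^2 = 0" by (rule tri_gen[OF qi qj])
  moreover have "(\<gamma> + 1) * c * c = (c)*((c)*(\<gamma>^2)+(c)*(\<gamma>))^2 + (c)*((c)*(c)+(c)*((1+c*\<gamma>^2)))*((c)*(\<gamma>^2)+(c)*(\<gamma>)) + (\<gamma>^2)*((c)*(c)+(c)*((1+c*\<gamma>^2)))^2" by (simp add: ns)
  ultimately have "(\<gamma> + 1) * c * c = 0" by simp
  thus False using fnz by simp
qed

lemma tri_0_a1_g:
  assumes na: "a \<notin> {0,1,\<gamma>,\<gamma>+1}" and "G a 0 = b" "G a (a+1) = b" "G a \<gamma> = b"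
  shows False
proof -
  have qi: "(c+\<gamma>^2)*a^2 + \<gamma>*a + 1 = 0" by (rule q_0_a1[OF na]) (use assms in simp)
  have qj: "c*a^2 + c*\<gamma>*a + \<gamma> = 0" by (rule q_0_g[OF na]) (use assms in simp)
  have "((c+\<gamma>^2))*((c)*(1)+((c+\<gamma>^2))*(\<gamma>))^2 + (\<gamma>)*((c)*(\<gamma>)+((c+\<gamma>^2))*(c*\<gamma>))*((c)*(1)+((c+\<gamma>^2))*(\<gamma>)) + (1)*((c)*(\<gamma>)+((c+\<gamma>^2))*(c*\<gamma>))^2 = 0" by (rule tri_gen[OF qi qj])
  moreover have "(\<gamma> + 1) * (c+\<gamma>) * (c+\<gamma>) * (c+\<gamma>+1) * (c+\<gamma>+1) = ((c+\<gamma>^2))*((c)*(1)+((c+\<gamma>^2))*(\<gamma>))^2 + (\<gamma>)*((c)*(\<gamma>)+((c+\<gamma>^2))*(c*\<gamma>))*((c)*(1)+((c+\<gamma>^2))*(\<gamma>)) + (1)*((c)*(\<gamma>)+((c+\<gamma>^2))*(c*\<gamma>))^2" by (simp add: ns)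
  ultimately have "(\<gamma> + 1) * (c+\<gamma>) * (c+\<gamma>) * (c+\<gamma>+1) * (c+\<gamma>+1) = 0" by simp
  thus False using fnz by simp
qed

lemma tri_0_a1_ag:
  assumes na: "a \<notin> {0,1,\<gamma>,\<gamma>+1}" and "G a 0 = b" "G a (a+1) = b" "G a (a+\<gamma>) = b"
  shows False
proof -
  have qi: "(c+\<gamma>^2)*a^2 + \<gamma>*a + 1 = 0" by (rule q_0_a1[OF na]) (use assms in simp)
  have qj: "c*a^2 + (1+c*\<gamma>^2)*a + \<gamma> = 0" by (rule q_0_ag[OF na]) (use assms in simp)
  have "((c+\<gamma>^2))*((c)*(1)+((c+\<gamma>^2))*(\<gamma>))^2 + (\<gamma>)*((c)*(\<gamma>)+((c+\<gamma>^2))*((1+c*\<gamma>^2)))*((c)*(1)+((c+\<gamma>^2))*(\<gamma>)) + (1)*((c)*(\<gamma>)+((c+\<gamma>^2))*((1+c*\<gamma>^2)))^2 = 0" by (rule tri_gen[OF qi qj])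
  moreover have "(\<gamma>) * c * c * c * (c+\<gamma>+1) = ((c+\<gamma>^2))*((c)*(1)+((c+\<gamma>^2))*(\<gamma>))^2 + (\<gamma>)*((c)*(\<gamma>)+((c+\<gamma>^2))*((1+c*\<gamma>^2)))*((c)*(1)+((c+\<gamma>^2))*(\<gamma>)) + (1)*((c)*(\<gamma>)+((c+\<gamma>^2))*((1+c*\<gamma>^2)))^2" by (simp add: ns)
  ultimately have "(\<gamma>) * c * c * c * (c+\<gamma>+1) = 0" by simp
  thus False using fnz by simp
qed

lemma tri_a_1_g:
  assumes na: "a \<notin> {0,1,\<gamma>,\<gamma>+1}" and "G a a = b" "G a 1 = b" "G a \<gamma> = b"
  shows False
proof -
  have qi: "(c*\<gamma>^2+1)*a^2 + c*\<gamma>*a + c = 0" by (rule q_1_a[OF na]) (use assms in simp)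
  have qj: "1*a^2 + (\<gamma>^2+c)*a + c*\<gamma> = 0" by (rule q_g_a[OF na]) (use assms in simp)
  have "((c*\<gamma>^2+1))*((1)*(c)+((c*\<gamma>^2+1))*(c*\<gamma>))^2 + (c*\<gamma>)*((1)*(c*\<gamma>)+((c*\<gamma>^2+1))*((\<gamma>^2+c)))*((1)*(c)+((c*\<gamma>^2+1))*(c*\<gamma>)) + (c)*((1)*(c*\<gamma>)+((c*\<gamma>^2+1))*((\<gamma>^2+c)))^2 = 0" by (rule tri_gen[OF qi qj])
  moreover have "(1) * c * (c+\<gamma>) = ((c*\<gamma>^2+1))*((1)*(c)+((c*\<gamma>^2+1))*(c*\<gamma>))^2 + (c*\<gamma>)*((1)*(c*\<gamma>)+((c*\<gamma>^2+1))*((\<gamma>^2+c)))*((1)*(c)+((c*\<gamma>^2+1))*(c*\<gamma>)) + (c)*((1)*(c*\<gamma>)+((c*\<gamma>^2+1))*((\<gamma>^2+c)))^2" by (simp add: ns)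
  ultimately have "(1) * c * (c+\<gamma>) = 0" by simp
  thus False using fnz by simp
qed

lemma tri_a_1_ag:
  assumes na: "a \<notin> {0,1,\<gamma>,\<gamma>+1}" and "G a a = b" "G a 1 = b" "G a (a+\<gamma>) = b"
  shows False
proof -
  have qi: "(c*\<gamma>^2+1)*a^2 + c*\<gamma>*a + c = 0" by (rule q_1_a[OF na]) (use assms in simp)
  have qj: "1*a^2 + \<gamma>*a + c*\<gamma> = 0" by (rule q_a_ag[OF na]) (use assms in simp)
  have "((c*\<gamma>^2+1))*((1)*(c)+((c*\<gamma>^2+1))*(c*\<gamma>))^2 + (c*\<gamma>)*((1)*(c*\<gamma>)+((c*\<gamma>^2+1))*(\<gamma>))*((1)*(c)+((c*\<gamma>^2+1))*(c*\<gamma>)) + (c)*((1)*(c*\<gamma>)+((c*\<gamma>^2+1))*(\<gamma>))^2 = 0" by (rule tri_gen[OF qi qj])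
  moreover have "(\<gamma> + 1) * c * (c+\<gamma>) * (c+\<gamma>) * (c+\<gamma>+1) * (c+\<gamma>+1) = ((c*\<gamma>^2+1))*((1)*(c)+((c*\<gamma>^2+1))*(c*\<gamma>))^2 + (c*\<gamma>)*((1)*(c*\<gamma>)+((c*\<gamma>^2+1))*(\<gamma>))*((1)*(c)+((c*\<gamma>^2+1))*(c*\<gamma>)) + (c)*((1)*(c*\<gamma>)+((c*\<gamma>^2+1))*(\<gamma>))^2" by (simp add: ns)
  ultimately have "(\<gamma> + 1) * c * (c+\<gamma>) * (c+\<gamma>) * (c+\<gamma>+1) * (c+\<gamma>+1) = 0" by simp
  thus False using fnz by simp
qed

lemma tri_a_a1_g:
  assumes na: "a \<notin> {0,1,\<gamma>,\<gamma>+1}" and "G a a = b" "G a (a+1) = b" "G a \<gamma> = b"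
  shows False
proof -
  have qi: "1*a^2 + 1*a + c*\<gamma>^2 = 0" by (rule q_a_a1[OF na]) (use assms in simp)
  have qj: "1*a^2 + (\<gamma>^2+c)*a + c*\<gamma> = 0" by (rule q_g_a[OF na]) (use assms in simp)
  have "(1)*((1)*(c*\<gamma>^2)+(1)*(c*\<gamma>))^2 + (1)*((1)*(1)+(1)*((\<gamma>^2+c)))*((1)*(c*\<gamma>^2)+(1)*(c*\<gamma>)) + (c*\<gamma>^2)*((1)*(1)+(1)*((\<gamma>^2+c)))^2 = 0" by (rule tri_gen[OF qi qj])
  moreover have "(\<gamma> + 1) * c * c * c = (1)*((1)*(c*\<gamma>^2)+(1)*(c*\<gamma>))^2 + (1)*((1)*(1)+(1)*((\<gamma>^2+c)))*((1)*(c*\<gamma>^2)+(1)*(c*\<gamma>)) + (c*\<gamma>^2)*((1)*(1)+(1)*((\<gamma>^2+c)))^2" by (simp add: ns)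
  ultimately have "(\<gamma> + 1) * c * c * c = 0" by simp
  thus False using fnz by simp
qed

lemma tri_a_a1_ag:
  assumes na: "a \<notin> {0,1,\<gamma>,\<gamma>+1}" and "G a a = b" "G a (a+1) = b" "G a (a+\<gamma>) = b"
  shows False
proof -
  have qi: "1*a^2 + 1*a + c*\<gamma>^2 = 0" by (rule q_a_a1[OF na]) (use assms in simp)
  have qj: "1*a^2 + \<gamma>*a + c*\<gamma> = 0" by (rule q_a_ag[OF na]) (use assms in simp)
  have "(1)*((1)*(c*\<gamma>^2)+(1)*(c*\<gamma>))^2 + (1)*((1)*(1)+(1)*(\<gamma>))*((1)*(c*\<gamma>^2)+(1)*(c*\<gamma>)) + (c*\<gamma>^2)*((1)*(1)+(1)*(\<gamma>))^2 = 0" by (rule tri_gen[OF qi qj])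
  moreover have "(1) * c * (c+\<gamma>) = (1)*((1)*(c*\<gamma>^2)+(1)*(c*\<gamma>))^2 + (1)*((1)*(1)+(1)*(\<gamma>))*((1)*(c*\<gamma>^2)+(1)*(c*\<gamma>)) + (c*\<gamma>^2)*((1)*(1)+(1)*(\<gamma>))^2" by (simp add: ns)
  ultimately have "(1) * c * (c+\<gamma>) = 0" by simp
  thus False using fnz by simp
qed


lemma Fgp1: "invCycle \<gamma> (\<gamma>+1) = \<gamma>"
proof -
  have "\<gamma>+1 \<notin> {0,1,\<gamma>}" using g0 g2 by (auto simp: ns)
  moreover have "inverse (\<gamma>+1) = \<gamma>" by (rule inverse_unique) (simp add: ns)
  ultimately show ?thesis by (simp add: Fgen)
qed

lemma s1: "(1::'a) + 1 = 0" by (simp add: ns)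
lemma s3: "\<gamma> + 1 + 1 = \<gamma>" by (simp add: ns)
lemma s4: "1 + (\<gamma> + 1) = \<gamma>" by (simp add: ns)
lemma s5: "\<gamma> + (\<gamma> + 1) = 1" by (simp add: ns)
lemma s6: "\<gamma> + 1 + \<gamma> = 1" by (simp add: ns)
lemmas sF = s1 s3 s4 s5 s6 c2_xx F0 F1 Fg Fgp1

lemma W_1: "G 1 0 = (\<gamma>+1) + c" "G 1 1 = 1 + c*(\<gamma>+1)" "G 1 \<gamma> = \<gamma>" "G 1 (\<gamma>+1) = c*\<gamma>"
  by (simp_all only: G_def sF add_0_left add_0_right mult_zero_right mult_1_right add.commute[of 1 \<gamma>])
lemma W_g: "G \<gamma> 0 = c" "G \<gamma> 1 = \<gamma> + c*(\<gamma>+1)" "G \<gamma> \<gamma> = 1" "G \<gamma> (\<gamma>+1) = (\<gamma>+1) + c*\<gamma>"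
  by (simp_all only: G_def sF add_0_left add_0_right mult_zero_right mult_1_right add.commute[of 1 \<gamma>])
lemma W_g1: "G (\<gamma>+1) 0 = \<gamma> + c" "G (\<gamma>+1) 1 = c*(\<gamma>+1)" "G (\<gamma>+1) \<gamma> = \<gamma>+1" "G (\<gamma>+1) (\<gamma>+1) = 1 + c*\<gamma>"
  by (simp_all only: G_def sF add_0_left add_0_right mult_zero_right mult_1_right add.commute[of 1 \<gamma>])

lemma f4_1_0_1: "G 1 0 \<noteq> G 1 1"
proof
  assume "G 1 0 = G 1 1"
  hence "(\<gamma>+1) + c = 1 + c*(\<gamma>+1)" by (simp only: W_1)
  hence "(\<gamma>+1) + c + (1 + c*(\<gamma>+1)) = 0" by (rule c2_eq[THEN iffD1])
  moreover have "(\<gamma>) * (c+1) = (\<gamma>+1) + c + (1 + c*(\<gamma>+1))" by (simp add: ns)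
  ultimately have "(\<gamma>) * (c+1) = 0" by simp
  thus False using fnz by simp
qed

lemma f4_1_0_g: "G 1 0 \<noteq> G 1 \<gamma>"
proof
  assume "G 1 0 = G 1 \<gamma>"
  hence "(\<gamma>+1) + c = \<gamma>" by (simp only: W_1)
  hence "(\<gamma>+1) + c + (\<gamma>) = 0" by (rule c2_eq[THEN iffD1])
  moreover have "(1) * (c+1) = (\<gamma>+1) + c + (\<gamma>)" by (simp add: ns)
  ultimately have "(1) * (c+1) = 0" by simp
  thus False using fnz by simp
qed

lemma f4_1_0_g1: "G 1 0 \<noteq> G 1 (\<gamma>+1)"
proof
  assume "G 1 0 = G 1 (\<gamma>+1)"
  hence "(\<gamma>+1) + c = c*\<gamma>" by (simp only: W_1)
  hence "(\<gamma>+1) + c + (c*\<gamma>) = 0" by (rule c2_eq[THEN iffD1])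
  moreover have "(\<gamma> + 1) * (c+1) = (\<gamma>+1) + c + (c*\<gamma>)" by (simp add: ns)
  ultimately have "(\<gamma> + 1) * (c+1) = 0" by simp
  thus False using fnz by simp
qed

lemma f4_1_1_g: "G 1 1 \<noteq> G 1 \<gamma>"
proof
  assume "G 1 1 = G 1 \<gamma>"
  hence "1 + c*(\<gamma>+1) = \<gamma>" by (simp only: W_1)
  hence "1 + c*(\<gamma>+1) + (\<gamma>) = 0" by (rule c2_eq[THEN iffD1])
  moreover have "(\<gamma> + 1) * (c+1) = 1 + c*(\<gamma>+1) + (\<gamma>)" by (simp add: ns)
  ultimately have "(\<gamma> + 1) * (c+1) = 0" by simp
  thus False using fnz by simp
qed

lemma f4_1_1_g1: "G 1 1 \<noteq> G 1 (\<gamma>+1)"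
proof
  assume "G 1 1 = G 1 (\<gamma>+1)"
  hence "1 + c*(\<gamma>+1) = c*\<gamma>" by (simp only: W_1)
  hence "1 + c*(\<gamma>+1) + (c*\<gamma>) = 0" by (rule c2_eq[THEN iffD1])
  moreover have "(1) * (c+1) = 1 + c*(\<gamma>+1) + (c*\<gamma>)" by (simp add: ns)
  ultimately have "(1) * (c+1) = 0" by simp
  thus False using fnz by simp
qed

lemma f4_1_g_g1: "G 1 \<gamma> \<noteq> G 1 (\<gamma>+1)"
proof
  assume "G 1 \<gamma> = G 1 (\<gamma>+1)"
  hence "\<gamma> = c*\<gamma>" by (simp only: W_1)
  hence "\<gamma> + (c*\<gamma>) = 0" by (rule c2_eq[THEN iffD1])
  moreover have "(\<gamma>) * (c+1) = \<gamma> + (c*\<gamma>)" by (simp add: ns)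
  ultimately have "(\<gamma>) * (c+1) = 0" by simp
  thus False using fnz by simp
qed

lemma f4_g_0_1: "G \<gamma> 0 \<noteq> G \<gamma> 1"
proof
  assume "G \<gamma> 0 = G \<gamma> 1"
  hence "c = \<gamma> + c*(\<gamma>+1)" by (simp only: W_g)
  hence "c + (\<gamma> + c*(\<gamma>+1)) = 0" by (rule c2_eq[THEN iffD1])
  moreover have "(\<gamma>) * (c+1) = c + (\<gamma> + c*(\<gamma>+1))" by (simp add: ns)
  ultimately have "(\<gamma>) * (c+1) = 0" by simp
  thus False using fnz by simp
qed

lemma f4_g_0_g: "G \<gamma> 0 \<noteq> G \<gamma> \<gamma>"
proof
  assume "G \<gamma> 0 = G \<gamma> \<gamma>"
  hence "c = 1" by (simp only: W_g)
  hence "c + (1) = 0" by (rule c2_eq[THEN iffD1])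
  moreover have "(1) * (c+1) = c + (1)" by (simp add: ns)
  ultimately have "(1) * (c+1) = 0" by simp
  thus False using fnz by simp
qed

lemma f4_g_0_g1: "G \<gamma> 0 \<noteq> G \<gamma> (\<gamma>+1)"
proof
  assume "G \<gamma> 0 = G \<gamma> (\<gamma>+1)"
  hence "c = (\<gamma>+1) + c*\<gamma>" by (simp only: W_g)
  hence "c + ((\<gamma>+1) + c*\<gamma>) = 0" by (rule c2_eq[THEN iffD1])
  moreover have "(\<gamma> + 1) * (c+1) = c + ((\<gamma>+1) + c*\<gamma>)" by (simp add: ns)
  ultimately have "(\<gamma> + 1) * (c+1) = 0" by simp
  thus False using fnz by simp
qed

lemma f4_g_1_g: "G \<gamma> 1 \<noteq> G \<gamma> \<gamma>"
proof
  assume "G \<gamma> 1 = G \<gamma> \<gamma>"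
  hence "\<gamma> + c*(\<gamma>+1) = 1" by (simp only: W_g)
  hence "\<gamma> + c*(\<gamma>+1) + (1) = 0" by (rule c2_eq[THEN iffD1])
  moreover have "(\<gamma> + 1) * (c+1) = \<gamma> + c*(\<gamma>+1) + (1)" by (simp add: ns)
  ultimately have "(\<gamma> + 1) * (c+1) = 0" by simp
  thus False using fnz by simp
qed

lemma f4_g_1_g1: "G \<gamma> 1 \<noteq> G \<gamma> (\<gamma>+1)"
proof
  assume "G \<gamma> 1 = G \<gamma> (\<gamma>+1)"
  hence "\<gamma> + c*(\<gamma>+1) = (\<gamma>+1) + c*\<gamma>" by (simp only: W_g)
  hence "\<gamma> + c*(\<gamma>+1) + ((\<gamma>+1) + c*\<gamma>) = 0" by (rule c2_eq[THEN iffD1])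
  moreover have "(1) * (c+1) = \<gamma> + c*(\<gamma>+1) + ((\<gamma>+1) + c*\<gamma>)" by (simp add: ns)
  ultimately have "(1) * (c+1) = 0" by simp
  thus False using fnz by simp
qed

lemma f4_g_g_g1: "G \<gamma> \<gamma> \<noteq> G \<gamma> (\<gamma>+1)"
proof
  assume "G \<gamma> \<gamma> = G \<gamma> (\<gamma>+1)"
  hence "1 = (\<gamma>+1) + c*\<gamma>" by (simp only: W_g)
  hence "1 + ((\<gamma>+1) + c*\<gamma>) = 0" by (rule c2_eq[THEN iffD1])
  moreover have "(\<gamma>) * (c+1) = 1 + ((\<gamma>+1) + c*\<gamma>)" by (simp add: ns)
  ultimately have "(\<gamma>) * (c+1) = 0" by simp
  thus False using fnz by simp
qed

lemma f4_g1_0_1: "G (\<gamma>+1) 0 \<noteq> G (\<gamma>+1) 1"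
proof
  assume "G (\<gamma>+1) 0 = G (\<gamma>+1) 1"
  hence "\<gamma> + c = c*(\<gamma>+1)" by (simp only: W_g1)
  hence "\<gamma> + c + (c*(\<gamma>+1)) = 0" by (rule c2_eq[THEN iffD1])
  moreover have "(\<gamma>) * (c+1) = \<gamma> + c + (c*(\<gamma>+1))" by (simp add: ns)
  ultimately have "(\<gamma>) * (c+1) = 0" by simp
  thus False using fnz by simp
qed

lemma f4_g1_0_g: "G (\<gamma>+1) 0 \<noteq> G (\<gamma>+1) \<gamma>"
proof
  assume "G (\<gamma>+1) 0 = G (\<gamma>+1) \<gamma>"
  hence "\<gamma> + c = \<gamma>+1" by (simp only: W_g1)
  hence "\<gamma> + c + (\<gamma>+1) = 0" by (rule c2_eq[THEN iffD1])
  moreover have "(1) * (c+1) = \<gamma> + c + (\<gamma>+1)" by (simp add: ns)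
  ultimately have "(1) * (c+1) = 0" by simp
  thus False using fnz by simp
qed

lemma f4_g1_0_g1: "G (\<gamma>+1) 0 \<noteq> G (\<gamma>+1) (\<gamma>+1)"
proof
  assume "G (\<gamma>+1) 0 = G (\<gamma>+1) (\<gamma>+1)"
  hence "\<gamma> + c = 1 + c*\<gamma>" by (simp only: W_g1)
  hence "\<gamma> + c + (1 + c*\<gamma>) = 0" by (rule c2_eq[THEN iffD1])
  moreover have "(\<gamma> + 1) * (c+1) = \<gamma> + c + (1 + c*\<gamma>)" by (simp add: ns)
  ultimately have "(\<gamma> + 1) * (c+1) = 0" by simp
  thus False using fnz by simp
qed

lemma f4_g1_1_g: "G (\<gamma>+1) 1 \<noteq> G (\<gamma>+1) \<gamma>"
proof
  assume "G (\<gamma>+1) 1 = G (\<gamma>+1) \<gamma>"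
  hence "c*(\<gamma>+1) = \<gamma>+1" by (simp only: W_g1)
  hence "c*(\<gamma>+1) + (\<gamma>+1) = 0" by (rule c2_eq[THEN iffD1])
  moreover have "(\<gamma> + 1) * (c+1) = c*(\<gamma>+1) + (\<gamma>+1)" by (simp add: ns)
  ultimately have "(\<gamma> + 1) * (c+1) = 0" by simp
  thus False using fnz by simp
qed

lemma f4_g1_1_g1: "G (\<gamma>+1) 1 \<noteq> G (\<gamma>+1) (\<gamma>+1)"
proof
  assume "G (\<gamma>+1) 1 = G (\<gamma>+1) (\<gamma>+1)"
  hence "c*(\<gamma>+1) = 1 + c*\<gamma>" by (simp only: W_g1)
  hence "c*(\<gamma>+1) + (1 + c*\<gamma>) = 0" by (rule c2_eq[THEN iffD1])
  moreover have "(1) * (c+1) = c*(\<gamma>+1) + (1 + c*\<gamma>)" by (simp add: ns)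
  ultimately have "(1) * (c+1) = 0" by simp
  thus False using fnz by simp
qed

lemma f4_g1_g_g1: "G (\<gamma>+1) \<gamma> \<noteq> G (\<gamma>+1) (\<gamma>+1)"
proof
  assume "G (\<gamma>+1) \<gamma> = G (\<gamma>+1) (\<gamma>+1)"
  hence "\<gamma>+1 = 1 + c*\<gamma>" by (simp only: W_g1)
  hence "\<gamma>+1 + (1 + c*\<gamma>) = 0" by (rule c2_eq[THEN iffD1])
  moreover have "(\<gamma>) * (c+1) = \<gamma>+1 + (1 + c*\<gamma>)" by (simp add: ns)
  ultimately have "(\<gamma>) * (c+1) = 0" by simp
  thus False using fnz by simp
qed

lemmas f4s = f4_1_0_1 f4_1_0_1[THEN not_sym] f4_1_0_g f4_1_0_g[THEN not_sym] f4_1_0_g1 f4_1_0_g1[THEN not_sym] f4_1_1_g f4_1_1_g[THEN not_sym] f4_1_1_g1 f4_1_1_g1[THEN not_sym] f4_1_g_g1 f4_1_g_g1[THEN not_sym] f4_g_0_1 f4_g_0_1[THEN not_sym] f4_g_0_g f4_g_0_g[THEN not_sym] f4_g_0_g1 f4_g_0_g1[THEN not_sym] f4_g_1_g f4_g_1_g[THEN not_sym] f4_g_1_g1 f4_g_1_g1[THEN not_sym] f4_g_g_g1 f4_g_g_g1[THEN not_sym] f4_g1_0_1 f4_g1_0_1[THEN not_sym] f4_g1_0_g f4_g1_0_g[THEN not_sym] f4_g1_0_g1 f4_g1_0_g1[THEN not_sym] f4_g1_1_g f4_g1_1_g[THEN not_sym] f4_g1_1_g1 f4_g1_1_g1[THEN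 not_sym] f4_g1_g_g1 f4_g1_g_g1[THEN not_sym]

lemma quad_card:
  fixes bb B C :: 'a
  assumes C: "C \<noteq> 0"
  shows "card {x. bb*x^2 + B*x + C = 0} \<le> 2"
proof (cases "{x. bb*x^2 + B*x + C = 0} = {}")
  case True thus ?thesis by simp
next
  case False
  then obtain x0 where x0: "bb*x0^2 + B*x0 + C = 0" by auto
  have key: "(x + x0)*(bb*(x+x0) + B) = (bb*x^2 + B*x + C) + (bb*x0^2 + B*x0 + C)" for x
    by (simp add: ns)
  show ?thesis
  proof (cases "bb = 0")
    case True
    have "{x. bb*x^2 + B*x + C = 0} \<subseteq> {x0}"
    proof
      fix x assume "x \<in> {x. bb*x^2 + B*x + C = 0}"
      hence "(x + x0)*(bb*(x+x0) + B) = 0" using key x0 by simp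
      hence "(x + x0)*B = 0" using True by simp
      moreover have "B \<noteq> 0"
      proof
        assume "B = 0" thus False using x0 True C by simp
      qed
      ultimately have "x + x0 = 0" by simp
      thus "x \<in> {x0}" using c2_eq by simp
    qed
    hence "card {x. bb*x^2 + B*x + C = 0} \<le> card {x0}" by (intro card_mono) auto
    thus ?thesis by simp
  next
    case False
    have "{x. bb*x^2 + B*x + C = 0} \<subseteq> {x0, x0 + B/bb}"
    proof
      fix x assume "x \<in> {x. bb*x^2 + B*x + C = 0}"
      hence "(x + x0)*(bb*(x+x0) + B) = 0" using key x0 by simp
      hence "x + x0 = 0 \<or> bb*(x+x0) + B = 0" by simp
      thus "x \<in> {x0, x0 + B/bb}"
      proof
        assume "x + x0 = 0" thus ?thesis using c2_eq by simp
      next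
        assume "bb*(x+x0) + B = 0"
        hence "bb*(x+x0) = B" using c2_eq by simp
        hence "x + x0 = B/bb" using False by (simp add: field_simps)
        hence "x = x0 + B/bb" using c2_solve[of x0 x] by (simp add: add.commute)
        thus ?thesis by simp
      qed
    qed
    hence "card {x. bb*x^2 + B*x + C = 0} \<le> card {x0, x0 + B/bb}" by (intro card_mono) auto
    also have "\<dots> \<le> 2" by (simp add: card_insert_if)
    finally show ?thesis .
  qed
qed

definition Sp where "Sp a = {0,1,\<gamma>,a,a+1,a+\<gamma>}"

lemma gen_sub:
  assumes a0: "a \<noteq> 0"
  shows "{x. G a x = b} - Sp a \<subseteq> {x. b*x^2 + (a*b+1+c)*x + c*a = 0}"
proof
  fix x assume x: "x \<in> {x. G a x = b} - Sp a"
  hence xs: "x \<notin> {0,1,\<gamma>}" and xa: "x \<noteq> a" "x \<noteq> a+1" "x \<noteq> a+\<gamma>" and e: "G a x = b"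
    by (auto simp: Sp_def)
  have "x + a \<notin> {0,1,\<gamma>}"
    using xa c2_solve2[of x a 0] c2_solve2[of x a 1] c2_solve2[of x a \<gamma>]
    by auto
  hence e2: "inverse (x+a) + c*inverse x = b" using e xs by (simp add: G_def Fgen)
  have i1: "inverse (x+a) * (x+a) = 1" using \<open>x + a \<notin> {0,1,\<gamma>}\<close> by simp
  have i2: "inverse x * x = 1" using xs by simp
  have "b*x^2 + (a*b+1+c)*x + c*a = (inverse (x+a) + c*inverse x + b)*(x*(x+a)) + x*(inverse (x+a)*(x+a)+1) + c*(x+a)*(inverse x*x+1)"
    by (simp add: ns)
  also have "\<dots> = 0" using e2 i1 i2 by (simp add: c2_xx)
  finally show "x \<in> {x. b*x^2 + (a*b+1+c)*x + c*a = 0}" by simp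
qed

lemma gen_le2:
  assumes a0: "a \<noteq> 0"
  shows "card ({x. G a x = b} - Sp a) \<le> 2"
proof -
  have "card ({x. G a x = b} - Sp a) \<le> card {x. b*x^2 + (a*b+1+c)*x + c*a = 0}"
    by (rule card_mono[OF _ gen_sub[OF a0]]) simp
  also have "\<dots> \<le> 2" by (rule quad_card) (use a0 c0 in simp)
  finally show ?thesis .
qed

lemma card_split: "card (X::'a set) \<le> card (X \<inter> Sp a) + card (X - Sp a)"
proof -
  have "X = (X \<inter> Sp a) \<union> (X - Sp a)" by auto
  hence "card X = card ((X \<inter> Sp a) \<union> (X - Sp a))" by simp
  also have "\<dots> \<le> card (X \<inter> Sp a) + card (X - Sp a)" by (rule card_Un_le)
  finally show ?thesis .
qed

lemma card_le1I: "(\<And>u v. u \<in> (A::'a set) \<Longrightarrow> v \<in> A \<Longrightarrow> u = v) \<Longrightarrow> card A \<le> 1"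
  using card_le_Suc0_iff_eq[of A] by auto

lemma spec_F4:
  assumes "a \<in> {1, \<gamma>, \<gamma>+1}"
  shows "card ({x. G a x = b} \<inter> Sp a) \<le> 1"
proof (rule card_le1I)
  fix u v assume u: "u \<in> {x. G a x = b} \<inter> Sp a" and v: "v \<in> {x. G a x = b} \<inter> Sp a"
  have sp: "Sp a = {0,1,\<gamma>,\<gamma>+1}"
  proof -
    have "a = 1 \<or> a = \<gamma> \<or> a = \<gamma>+1" using assms by simp
    thus ?thesis
    proof (elim disjE)
      assume "a = 1" thus ?thesis by (simp only: Sp_def s1 c2_xx add.commute[of 1 \<gamma>]) blast
    next
      assume "a = \<gamma>" thus ?thesis by (simp only: Sp_def s1 c2_xx add.commute[of 1 \<gamma>]) blast
    next
      assume "a = \<gamma>+1" thus ?thesis by (simp only: Sp_def s3 s6) blast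
    qed
  qed
  have e: "G a u = G a v" using u v by simp
  have uu: "u \<in> {0,1,\<gamma>,\<gamma>+1}" using u sp by simp
  have vv: "v \<in> {0,1,\<gamma>,\<gamma>+1}" using v sp by simp
  have aa: "a = 1 \<or> a = \<gamma> \<or> a = \<gamma>+1" using assms by simp
  show "u = v"
  proof (rule ccontr)
    assume ne: "u \<noteq> v"
    from aa uu vv show False using e ne by (elim disjE insertE emptyE; simp add: f4s)
  qed
qed

lemma F_inj: "invCycle \<gamma> x = invCycle \<gamma> y \<Longrightarrow> x = y"
proof -
  have v: "invCycle \<gamma> x \<in> {1, \<gamma>+1, 0} \<Longrightarrow> x \<in> {0,1,\<gamma>}" for x
  proof (rule ccontr)
    assume h: "invCycle \<gamma> x \<in> {1, \<gamma>+1, 0}" "x \<notin> {0,1,\<gamma>}"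
    hence iv: "inverse x \<in> {1, \<gamma>+1, 0}" by (simp add: Fgen)
    have ig: "inverse (\<gamma>+1) = \<gamma>" by (rule inverse_unique) (simp add: ns)
    have xi: "x = inverse (inverse x)" by simp
    from iv have "x \<in> {1, \<gamma>, 0}"
    proof (elim insertE)
      assume "inverse x = 1" thus ?thesis using xi by simp
    next
      assume "inverse x = \<gamma>+1" thus ?thesis using xi ig by simp
    next
      assume "inverse x \<in> {}" thus ?thesis by simp
    qed (use xi in simp)
    thus False using h by auto
  qed
  have w: "x \<in> {0,1,\<gamma>} \<Longrightarrow> invCycle \<gamma> x \<in> {1, \<gamma>+1, 0}" for x using F0 F1 Fg by auto
  assume e: "invCycle \<gamma> x = invCycle \<gamma> y"
  show "x = y"
  proof (cases "x \<in> {0,1,\<gamma>}")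
    case True
    hence "y \<in> {0,1,\<gamma>}" using e v w by metis
    moreover have "(1::'a) \<noteq> \<gamma> + 1" "(1::'a) \<noteq> 0" "\<gamma> + 1 \<noteq> 0" using g0 g2 by auto
    ultimately show ?thesis using True e F0 F1 Fg by auto
  next
    case False
    hence "y \<notin> {0,1,\<gamma>}" using e v w by metis
    thus ?thesis using False e by (simp add: Fgen)
  qed
qed

lemma a0_le1: "card {x. G 0 x = b} \<le> 1"
proof (rule card_le1I)
  fix u v assume "u \<in> {x. G 0 x = b}" "v \<in> {x. G 0 x = b}"
  hence "(1+c) * invCycle \<gamma> u = (1+c) * invCycle \<gamma> v" by (simp add: G_def algebra_simps)
  hence "invCycle \<gamma> u = invCycle \<gamma> v" using fnz1 by (simp add: add.commute)
  thus "u = v" by (rule F_inj)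
qed


lemma exn_0_a: "a \<notin> {0,1,\<gamma>,\<gamma>+1} \<Longrightarrow> G a 0 \<noteq> G a a" using ex_0_a by blast
lemma exn_1_a1: "a \<notin> {0,1,\<gamma>,\<gamma>+1} \<Longrightarrow> G a 1 \<noteq> G a (a+1)" using ex_1_a1 by blast
lemma exn_g_ag: "a \<notin> {0,1,\<gamma>,\<gamma>+1} \<Longrightarrow> G a \<gamma> \<noteq> G a (a+\<gamma>)" using ex_g_ag by blast
lemmas exns = exn_0_a exn_1_a1 exn_g_ag exn_0_a[THEN not_sym] exn_1_a1[THEN not_sym] exn_g_ag[THEN not_sym]

context
  assumes T0: "tr n (c * \<gamma>) = 1"
    and T1: "tr n (c * \<gamma>^2) = 1"
    and T2: "tr n (inverse c * \<gamma>) = 1"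
    and T3: "tr n (inverse c * \<gamma>^2) = 1"
    and T4: "tr n (c / (c + \<gamma>)^2) = 1"
    and T5: "tr n (c * \<gamma>^2 / (c + \<gamma>)^2) = 1"
    and T6: "tr n (c * \<gamma> / (c + \<gamma>^2)^2) = 1"
    and T7: "tr n (c / (c + \<gamma>^2)^2) = 1"
begin

lemma pn_0_1: "a \<notin> {0,1,\<gamma>,\<gamma>+1} \<Longrightarrow> G a 0 \<noteq> G a 1"
  using t_0_1[of a] T3 by auto
lemma pn_0_g: "a \<notin> {0,1,\<gamma>,\<gamma>+1} \<Longrightarrow> G a 0 \<noteq> G a \<gamma>"
  using t_0_g[of a] T3 by auto
lemma pn_0_a1: "a \<notin> {0,1,\<gamma>,\<gamma>+1} \<Longrightarrow> G a 0 \<noteq> G a (a+1)"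
  using t_0_a1[of a] T0 by auto
lemma pn_0_ag: "a \<notin> {0,1,\<gamma>,\<gamma>+1} \<Longrightarrow> G a 0 \<noteq> G a (a+\<gamma>)"
  using t_0_ag[of a] T4 by auto
lemma pn_1_g: "a \<notin> {0,1,\<gamma>,\<gamma>+1} \<Longrightarrow> G a 1 \<noteq> G a \<gamma>"
  using t_1_g[of a] T3 by auto
lemma pn_1_a: "a \<notin> {0,1,\<gamma>,\<gamma>+1} \<Longrightarrow> G a 1 \<noteq> G a a"
  using t_1_a[of a] T2 by auto
lemma pn_1_ag: "a \<notin> {0,1,\<gamma>,\<gamma>+1} \<Longrightarrow> G a 1 \<noteq> G a (a+\<gamma>)"
  using t_1_ag[of a] T5 by auto
lemma pn_g_a: "a \<notin> {0,1,\<gamma>,\<gamma>+1} \<Longrightarrow> G a \<gamma> \<noteq> G a a"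
  using t_g_a[of a] T6 by auto
lemma pn_g_a1: "a \<notin> {0,1,\<gamma>,\<gamma>+1} \<Longrightarrow> G a \<gamma> \<noteq> G a (a+1)"
  using t_g_a1[of a] T7 by auto
lemma pn_a_a1: "a \<notin> {0,1,\<gamma>,\<gamma>+1} \<Longrightarrow> G a a \<noteq> G a (a+1)"
  using t_a_a1[of a] T1 by auto
lemma pn_a_ag: "a \<notin> {0,1,\<gamma>,\<gamma>+1} \<Longrightarrow> G a a \<noteq> G a (a+\<gamma>)"
  using t_a_ag[of a] T1 by auto
lemma pn_a1_ag: "a \<notin> {0,1,\<gamma>,\<gamma>+1} \<Longrightarrow> G a (a+1) \<noteq> G a (a+\<gamma>)"
  using t_a1_ag[of a] T1 by auto
lemmas pns = pn_0_1 pn_0_1[THEN not_sym] pn_0_g pn_0_g[THEN not_sym] pn_0_a1 pn_0_a1[THEN not_sym] pn_0_ag pn_0_ag[THEN not_sym] pn_1_g pn_1_g[THEN not_sym] pn_1_a pn_1_a[THEN not_sym] pn_1_ag pn_1_ag[THEN not_sym] pn_g_a pn_g_a[THEN not_sym] pn_g_a1 pn_g_a1[THEN not_sym] pn_a_a1 pn_a_a1[THEN not_sym] pn_a_ag pn_a_ag[THEN not_sym] pn_a1_ag pn_a1_ag[THEN not_sym]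

lemma spec_tr:
  assumes na: "a \<notin> {0,1,\<gamma>,\<gamma>+1}"
  shows "card ({x. G a x = b} \<inter> Sp a) \<le> 1"
proof (rule card_le1I)
  fix u v assume u: "u \<in> {x. G a x = b} \<inter> Sp a" and v: "v \<in> {x. G a x = b} \<inter> Sp a"
  have e: "G a u = G a v" using u v by simp
  have uu: "u \<in> {0,1,\<gamma>,a,a+1,a+\<gamma>}" using u by (simp add: Sp_def)
  have vv: "v \<in> {0,1,\<gamma>,a,a+1,a+\<gamma>}" using v by (simp add: Sp_def)
  show "u = v"
  proof (rule ccontr)
    assume ne: "u \<noteq> v"
    from uu vv show False using e ne pns[OF na] exns[OF na] by (elim insertE emptyE; simp)
  qed
qed

end


lemma card_Un3: "card ((A::'a set) \<union> B \<union> C) \<le> card A + card B + card C"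
  by (meson add_le_mono1 card_Un_le order_trans)

lemma spec_gen:
  assumes na: "a \<notin> {0,1,\<gamma>,\<gamma>+1}"
  shows "card ({x. G a x = b} \<inter> Sp a) \<le> 2"
proof -
  define P1 where "P1 = {x. G a x = b} \<inter> {0,a}"
  define P2 where "P2 = {x. G a x = b} \<inter> {1,a+1}"
  define P3 where "P3 = {x. G a x = b} \<inter> {\<gamma>,a+\<gamma>}"
  have "{x. G a x = b} \<inter> Sp a = P1 \<union> P2 \<union> P3" by (auto simp: Sp_def P1_def P2_def P3_def)
  hence le: "card ({x. G a x = b} \<inter> Sp a) \<le> card P1 + card P2 + card P3" using card_Un3 by simp
  have c1: "card P1 \<le> 1"
  proof (rule card_le1I)
    fix u v assume "u \<in> P1" "v \<in> P1"
    hence uu: "u \<in> {0,a}" "v \<in> {0,a}" and e: "G a u = G a v" by (auto simp: P1_def)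
    show "u = v" proof (rule ccontr)
      assume ne: "u \<noteq> v" from uu show False using e ne exns[OF na] by (elim insertE emptyE; simp)
    qed
  qed
  have c2: "card P2 \<le> 1"
  proof (rule card_le1I)
    fix u v assume "u \<in> P2" "v \<in> P2"
    hence uu: "u \<in> {1,a+1}" "v \<in> {1,a+1}" and e: "G a u = G a v" by (auto simp: P2_def)
    show "u = v" proof (rule ccontr)
      assume ne: "u \<noteq> v" from uu show False using e ne exns[OF na] by (elim insertE emptyE; simp)
    qed
  qed
  have c3: "card P3 \<le> 1"
  proof (rule card_le1I)
    fix u v assume "u \<in> P3" "v \<in> P3"
    hence uu: "u \<in> {\<gamma>,a+\<gamma>}" "v \<in> {\<gamma>,a+\<gamma>}" and e: "G a u = G a v" by (auto simp: P3_def)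
    show "u = v" proof (rule ccontr)
      assume ne: "u \<noteq> v" from uu show False using e ne exns[OF na] by (elim insertE emptyE; simp)
    qed
  qed
  have "\<not> (P1 \<noteq> {} \<and> P2 \<noteq> {} \<and> P3 \<noteq> {})"
  proof
    assume "P1 \<noteq> {} \<and> P2 \<noteq> {} \<and> P3 \<noteq> {}"
    then obtain x y z where "x \<in> P1" "y \<in> P2" "z \<in> P3" by blast
    hence m: "x \<in> {0,a}" "y \<in> {1,a+1}" "z \<in> {\<gamma>,a+\<gamma>}" and e: "G a x = b" "G a y = b" "G a z = b"
      by (auto simp: P1_def P2_def P3_def)
    from m show False
      apply (elim insertE emptyE)
      using e tri_0_1_g[OF na] tri_0_1_ag[OF na] tri_0_a1_g[OF na] tri_0_a1_ag[OF na]
        tri_a_1_g[OF na] tri_a_1_ag[OF na] tri_a_a1_g[OF na] tri_a_a1_ag[OF na]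
      by blast+
  qed
  hence "card P1 = 0 \<or> card P2 = 0 \<or> card P3 = 0" by (auto simp: P1_def P2_def P3_def)
  thus ?thesis using le c1 c2 c3 by linarith
qed


lemma inv_id3:
  fixes L R ia ib ic da db dc X :: 'a
  assumes "ia*da = 1" "ib*db = 1" "ic*dc = 1" "da*db*dc \<noteq> 0"
    "(L + R)*(da*db*dc) = X1*(ia*da+1) + X2*(ib*db+1) + X3*(ic*dc+1)"
  shows "L = R"
proof -
  have "(L + R)*(da*db*dc) = 0" using assms(1-3,5) by (simp add: c2_xx)
  hence "L + R = 0" using assms(4) by simp
  thus ?thesis using c2_eq by simp
qed

lemma frac_ne: "(D::'a) \<noteq> 0 \<Longrightarrow> N + k*D \<noteq> 0 \<Longrightarrow> N/D \<noteq> k"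
proof
  assume D: "D \<noteq> 0" and h: "N + k*D \<noteq> 0" and e: "N/D = k"
  hence "N = k*D" by (simp add: field_simps)
  hence "N + k*D = 0" by (simp add: c2_xx)
  thus False using h by simp
qed

lemma ne_of_add: "(x::'a) + k \<noteq> 0 \<Longrightarrow> x \<noteq> k" using c2_xx by auto

lemma lower_core:
  fixes A x0 N D :: 'a
  assumes nA0: "A + 0 \<noteq> 0" and nA1: "A + 1 \<noteq> 0" and nA2: "A + \<gamma> \<noteq> 0"
    and nX0: "x0 + 0 \<noteq> 0" and nX1: "x0 + 1 \<noteq> 0" and nX2: "x0 + \<gamma> \<noteq> 0"
    and nD: "D \<noteq> 0" and nN: "N \<noteq> 0"
    and nP0: "N + 0*D \<noteq> 0" and nP1: "N + 1*D \<noteq> 0" and nP2: "N + \<gamma>*D \<noteq> 0"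
    and nQ0: "N + (A + 0)*D \<noteq> 0" and nQ1: "N + (A + 1)*D \<noteq> 0" and nQ2: "N + (A + \<gamma>)*D \<noteq> 0"
    and nR: "N + x0*D \<noteq> 0"
    and idX: "x0 + A = 1 + c"
    and id1: "inverse (1+c) + c*inverse x0 = 1 + c*inverse A"
    and id2: "D*inverse (N + A*D) + c*(D*inverse N) = 1 + c*inverse A"
  shows "3 \<le> card {x. G A x = 1 + c*inverse A}"
proof -
  have As: "A \<notin> {0,1,\<gamma>}" using ne_of_add nA0 nA1 nA2 by auto
  have Xs: "x0 \<notin> {0,1,\<gamma>}" using ne_of_add nX0 nX1 nX2 by auto
  have Cs: "1 + c \<notin> {0,1,\<gamma>}"
  proof -
    have "1 + c \<noteq> 0" using fnz1 by (simp add: add.commute)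
    moreover have "1 + c \<noteq> 1" using c0 by simp
    moreover have "1 + c \<noteq> \<gamma>"
    proof
      assume "1 + c = \<gamma>" hence "c = 1 + \<gamma>" by (rule c2_solve)
      thus False using cg1 by (simp add: add.commute)
    qed
    ultimately show ?thesis by simp
  qed
  define x1 where "x1 = N/D"
  have x1s: "x1 \<notin> {0,1,\<gamma>}" using frac_ne[OF nD nP0] frac_ne[OF nD nP1] frac_ne[OF nD nP2]
    unfolding x1_def by auto
  have x1a: "x1 + A = (N + A*D)/D" using nD unfolding x1_def by (simp add: field_simps)
  have q: "(N + A*D) + k*D = N + (A+k)*D" for k by (simp add: algebra_simps)
  have "(N + A*D)/D \<noteq> 0" by (rule frac_ne[OF nD]) (metis nQ0 q)
  moreover have "(N + A*D)/D \<noteq> 1" by (rule frac_ne[OF nD]) (metis nQ1 q)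
  moreover have "(N + A*D)/D \<noteq> \<gamma>" by (rule frac_ne[OF nD]) (metis nQ2 q)
  ultimately have x1as: "x1 + A \<notin> {0,1,\<gamma>}" using x1a by simp
  have e1: "G A A = 1 + c*inverse A" using As by (simp add: G_def c2_xx F0 Fgen)
  have e2: "G A x0 = 1 + c*inverse A" using Xs Cs idX id1 by (simp add: G_def Fgen)
  have e3: "G A x1 = 1 + c*inverse A"
  proof -
    have "G A x1 = inverse (x1 + A) + c*inverse x1" using x1s x1as by (simp add: G_def Fgen)
    also have "\<dots> = D*inverse (N + A*D) + c*(D*inverse N)" using x1a unfolding x1_def by (simp add: divide_inverse mult.commute)
    finally show ?thesis using id2 by simp
  qed
  have d1: "A \<noteq> x0" using idX Cs c2_xx by (metis add.commute insertCI)
  have d2: "x1 \<noteq> A" using frac_ne[OF nD, of N A] nQ0 unfolding x1_def by simp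
  have d3: "x1 \<noteq> x0" using frac_ne[OF nD nR] unfolding x1_def by simp
  have "card {A, x0, x1} = 3" using d1 d2 d3 by auto
  moreover have "card {A, x0, x1} \<le> card {x. G A x = 1 + c*inverse A}"
    by (rule card_mono) (use e1 e2 e3 in auto)
  ultimately show ?thesis by simp
qed

lemma lower_ne:
  assumes hN: "(c^2 + \<gamma>*c + \<gamma>) \<noteq> 0"
  shows "3 \<le> card {x. G (\<gamma>*(1+c)) x = 1 + c*inverse (\<gamma>*(1+c))}"
proof -
  have nD: "(\<gamma> + (\<gamma>+1)*c) \<noteq> 0"
  proof -
    have eq: "(\<gamma> + (\<gamma>+1)*c) = (\<gamma> + 1) * (c+\<gamma>+1)" by (simp add: ns)
    show ?thesis unfolding eq using fnz by simp
  qed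
  have nN: "c*(1+c) \<noteq> 0"
  proof -
    have eq: "c*(1+c) = (1) * c * (c+1)" by (simp add: ns)
    show ?thesis unfolding eq using fnz by simp
  qed
  have nA0: "\<gamma>*(1+c) + 0 \<noteq> 0"
  proof -
    have eq: "\<gamma>*(1+c) + 0 = (\<gamma>) * (c+1)" by (simp add: ns)
    show ?thesis unfolding eq using fnz by simp
  qed
  have nX0: "(\<gamma>+1)*(1+c) + 0 \<noteq> 0"
  proof -
    have eq: "(\<gamma>+1)*(1+c) + 0 = (\<gamma> + 1) * (c+1)" by (simp add: ns)
    show ?thesis unfolding eq using fnz by simp
  qed
  have nP0: "c*(1+c) + 0*(\<gamma> + (\<gamma>+1)*c) \<noteq> 0"
  proof -
    have eq: "c*(1+c) + 0*(\<gamma> + (\<gamma>+1)*c) = (1) * c * (c+1)" by (simp add: ns)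
    show ?thesis unfolding eq using fnz by simp
  qed
  have nQ0: "c*(1+c) + (\<gamma>*(1+c) + 0)*(\<gamma> + (\<gamma>+1)*c) \<noteq> 0"
  proof -
    have eq: "c*(1+c) + (\<gamma>*(1+c) + 0)*(\<gamma> + (\<gamma>+1)*c) = (\<gamma> + 1) * (c+1)" by (simp add: ns)
    show ?thesis unfolding eq using fnz by simp
  qed
  have nA1: "\<gamma>*(1+c) + 1 \<noteq> 0"
  proof -
    have eq: "\<gamma>*(1+c) + 1 = (\<gamma>) * (c+\<gamma>)" by (simp add: ns)
    show ?thesis unfolding eq using fnz by simp
  qed
  have nX1: "(\<gamma>+1)*(1+c) + 1 \<noteq> 0"
  proof -
    have eq: "(\<gamma>+1)*(1+c) + 1 = (\<gamma> + 1) * (c+\<gamma>+1)" by (simp add: ns)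
    show ?thesis unfolding eq using fnz by simp
  qed
  have nP1: "c*(1+c) + 1*(\<gamma> + (\<gamma>+1)*c) \<noteq> 0"
  proof -
    have eq: "c*(1+c) + 1*(\<gamma> + (\<gamma>+1)*c) = 1 * (c^2 + \<gamma>*c + \<gamma>)" by (simp add: ns)
    show ?thesis unfolding eq using fnz hN by simp
  qed
  have nQ1: "c*(1+c) + (\<gamma>*(1+c) + 1)*(\<gamma> + (\<gamma>+1)*c) \<noteq> 0"
  proof -
    have eq: "c*(1+c) + (\<gamma>*(1+c) + 1)*(\<gamma> + (\<gamma>+1)*c) = (1)" by (simp add: ns)
    show ?thesis unfolding eq using fnz by simp
  qed
  have nA2: "\<gamma>*(1+c) + \<gamma> \<noteq> 0"
  proof -
    have eq: "\<gamma>*(1+c) + \<gamma> = (\<gamma>) * c" by (simp add: ns)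
    show ?thesis unfolding eq using fnz by simp
  qed
  have nX2: "(\<gamma>+1)*(1+c) + \<gamma> \<noteq> 0"
  proof -
    have eq: "(\<gamma>+1)*(1+c) + \<gamma> = (\<gamma> + 1) * (c+\<gamma>)" by (simp add: ns)
    show ?thesis unfolding eq using fnz by simp
  qed
  have nP2: "c*(1+c) + \<gamma>*(\<gamma> + (\<gamma>+1)*c) \<noteq> 0"
  proof -
    have eq: "c*(1+c) + \<gamma>*(\<gamma> + (\<gamma>+1)*c) = (1) * (c+\<gamma>) * (c+\<gamma>)" by (simp add: ns)
    show ?thesis unfolding eq using fnz by simp
  qed
  have nQ2: "c*(1+c) + (\<gamma>*(1+c) + \<gamma>)*(\<gamma> + (\<gamma>+1)*c) \<noteq> 0"
  proof -
    have eq: "c*(1+c) + (\<gamma>*(1+c) + \<gamma>)*(\<gamma> + (\<gamma>+1)*c) = (\<gamma>) * c" by (simp add: ns)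
    show ?thesis unfolding eq using fnz by simp
  qed
  have nR: "c*(1+c) + (\<gamma>+1)*(1+c)*(\<gamma> + (\<gamma>+1)*c) \<noteq> 0"
  proof -
    have eq: "c*(1+c) + (\<gamma>+1)*(1+c)*(\<gamma> + (\<gamma>+1)*c) = (\<gamma> + 1) * (c+1) * (c+\<gamma>)" by (simp add: ns)
    show ?thesis unfolding eq using fnz by simp
  qed

  have nA: "\<gamma>*(1+c) \<noteq> 0" using nA0 by simp
  have nX: "(\<gamma>+1)*(1+c) \<noteq> 0" using nX0 by simp
  have nQ: "c*(1+c) + \<gamma>*(1+c)*(\<gamma> + (\<gamma>+1)*c) \<noteq> 0" using nQ0 by simp
  have idX: "(\<gamma>+1)*(1+c) + \<gamma>*(1+c) = 1 + c" by (simp add: ns)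
  have id1: "inverse (1+c) + c*inverse ((\<gamma>+1)*(1+c)) = 1 + c*inverse (\<gamma>*(1+c))"
  proof (rule inv_id3[where da="1+c" and db="(\<gamma>+1)*(1+c)" and dc="\<gamma>*(1+c)"])
    show "inverse (1+c) * (1+c) = 1" by (rule left_inverse) (fact fnz3)
    show "inverse ((\<gamma>+1)*(1+c)) * ((\<gamma>+1)*(1+c)) = 1" by (rule left_inverse) (fact nX)
    show "inverse (\<gamma>*(1+c)) * (\<gamma>*(1+c)) = 1" by (rule left_inverse) (fact nA)
    show "(1+c)*((\<gamma>+1)*(1+c))*(\<gamma>*(1+c)) \<noteq> 0" using fnz3 nX nA by simp
    show "(inverse (1+c) + c*inverse ((\<gamma>+1)*(1+c)) + (1 + c*inverse (\<gamma>*(1+c))))*((1+c)*((\<gamma>+1)*(1+c))*(\<gamma>*(1+c))) = ((\<gamma>+1)*(1+c))*(\<gamma>*(1+c))*(inverse (1+c)*(1+c)+1) + c*(1+c)*(\<gamma>*(1+c))*(inverse ((\<gamma>+1)*(1+c))*((\<gamma>+1)*(1+c))+1) + c*(1+c)*((\<gamma>+1)*(1+c))*(inverse (\<gamma>*(1+c))*(\<gamma>*(1+c))+1)"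
      by (simp add: ns)
  qed
  have id2: "(\<gamma> + (\<gamma>+1)*c)*inverse (c*(1+c) + \<gamma>*(1+c)*(\<gamma> + (\<gamma>+1)*c)) + c*((\<gamma> + (\<gamma>+1)*c)*inverse (c*(1+c))) = 1 + c*inverse (\<gamma>*(1+c))"
  proof (rule inv_id3[where da="c*(1+c) + \<gamma>*(1+c)*(\<gamma> + (\<gamma>+1)*c)" and db="c*(1+c)" and dc="\<gamma>*(1+c)"])
    show "inverse (c*(1+c) + \<gamma>*(1+c)*(\<gamma> + (\<gamma>+1)*c)) * (c*(1+c) + \<gamma>*(1+c)*(\<gamma> + (\<gamma>+1)*c)) = 1" by (rule left_inverse) (fact nQ)
    show "inverse (c*(1+c)) * (c*(1+c)) = 1" by (rule left_inverse) (fact nN)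
    show "inverse (\<gamma>*(1+c)) * (\<gamma>*(1+c)) = 1" by (rule left_inverse) (fact nA)
    show "(c*(1+c) + \<gamma>*(1+c)*(\<gamma> + (\<gamma>+1)*c))*(c*(1+c))*(\<gamma>*(1+c)) \<noteq> 0" using nQ nN nA by simp
    show "((\<gamma> + (\<gamma>+1)*c)*inverse (c*(1+c) + \<gamma>*(1+c)*(\<gamma> + (\<gamma>+1)*c)) + c*((\<gamma> + (\<gamma>+1)*c)*inverse (c*(1+c))) + (1 + c*inverse (\<gamma>*(1+c))))*((c*(1+c) + \<gamma>*(1+c)*(\<gamma> + (\<gamma>+1)*c))*(c*(1+c))*(\<gamma>*(1+c))) = (\<gamma> + (\<gamma>+1)*c)*(c*(1+c))*(\<gamma>*(1+c))*(inverse (c*(1+c) + \<gamma>*(1+c)*(\<gamma> + (\<gamma>+1)*c))*(c*(1+c) + \<gamma>*(1+c)*(\<gamma> + (\<gamma>+1)*c))+1) + c*(\<gamma> + (\<gamma>+1)*c)*(c*(1+c) + \<gamma>*(1+c)*(\<gamma> + (\<gamma>+1)*c))*(\<gamma>*(1+c))*(inverse (c*(1+c))*(c*(1+c))+1) + c*(c*(1+c) + \<gamma>*(1+c)*(\<gamma> + (\<gamma>+1)*c))*(c*(1+c))*(inverse (\<gamma>*(1+c))*(\<gamma>*(1+c))+1)"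
      by (simp add: ns)
  qed
  show ?thesis
    by (rule lower_core[OF nA0 nA1 nA2 nX0 nX1 nX2 nD nN nP0 nP1 nP2 nQ0 nQ1 nQ2 nR idX id1 id2])
qed

lemma lower_eq:
  assumes hE: "(c^2 + \<gamma>*c + \<gamma>) = 0"
  shows "3 \<le> card {x. G ((\<gamma>+1)*(1+c)) x = 1 + c*inverse ((\<gamma>+1)*(1+c))}"
proof -
  have nD: "(1 + (\<gamma>+1)*c) \<noteq> 0"
  proof -
    have eq: "(1 + (\<gamma>+1)*c) = (\<gamma> + 1) * (c+\<gamma>)" by (simp add: ns)
    show ?thesis unfolding eq using fnz by simp
  qed
  have nN: "c*\<gamma>*(1+c) \<noteq> 0"
  proof -
    have eq: "c*\<gamma>*(1+c) = (\<gamma>) * c * (c+1)" by (simp add: ns)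
    show ?thesis unfolding eq using fnz by simp
  qed
  have nA0: "(\<gamma>+1)*(1+c) + 0 \<noteq> 0"
  proof -
    have eq: "(\<gamma>+1)*(1+c) + 0 = (\<gamma> + 1) * (c+1)" by (simp add: ns)
    show ?thesis unfolding eq using fnz by simp
  qed
  have nX0: "\<gamma>*(1+c) + 0 \<noteq> 0"
  proof -
    have eq: "\<gamma>*(1+c) + 0 = (\<gamma>) * (c+1)" by (simp add: ns)
    show ?thesis unfolding eq using fnz by simp
  qed
  have nP0: "c*\<gamma>*(1+c) + 0*(1 + (\<gamma>+1)*c) \<noteq> 0"
  proof -
    have eq: "c*\<gamma>*(1+c) + 0*(1 + (\<gamma>+1)*c) = (\<gamma>) * c * (c+1)" by (simp add: ns)
    show ?thesis unfolding eq using fnz by simp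
  qed
  have nQ0: "c*\<gamma>*(1+c) + ((\<gamma>+1)*(1+c) + 0)*(1 + (\<gamma>+1)*c) \<noteq> 0"
  proof -
    have eq: "c*\<gamma>*(1+c) + ((\<gamma>+1)*(1+c) + 0)*(1 + (\<gamma>+1)*c) = (\<gamma> + 1) * (c+1)" by (simp add: ns)
    show ?thesis unfolding eq using fnz by simp
  qed
  have nA1: "(\<gamma>+1)*(1+c) + 1 \<noteq> 0"
  proof -
    have eq: "(\<gamma>+1)*(1+c) + 1 = (\<gamma> + 1) * (c+\<gamma>+1)" by (simp add: ns)
    show ?thesis unfolding eq using fnz by simp
  qed
  have nX1: "\<gamma>*(1+c) + 1 \<noteq> 0"
  proof -
    have eq: "\<gamma>*(1+c) + 1 = (\<gamma>) * (c+\<gamma>)" by (simp add: ns)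
    show ?thesis unfolding eq using fnz by simp
  qed
  have nP1: "c*\<gamma>*(1+c) + 1*(1 + (\<gamma>+1)*c) \<noteq> 0"
  proof -
    have eq: "c*\<gamma>*(1+c) + 1*(1 + (\<gamma>+1)*c) = (\<gamma>)*(c^2 + \<gamma>*c + \<gamma>) + (\<gamma>) * (c+1)" by (simp add: ns)
    show ?thesis unfolding eq using fnz hE by simp
  qed
  have nQ1: "c*\<gamma>*(1+c) + ((\<gamma>+1)*(1+c) + 1)*(1 + (\<gamma>+1)*c) \<noteq> 0"
  proof -
    have eq: "c*\<gamma>*(1+c) + ((\<gamma>+1)*(1+c) + 1)*(1 + (\<gamma>+1)*c) = (\<gamma>)" by (simp add: ns)
    show ?thesis unfolding eq using fnz by simp
  qed
  have nA2: "(\<gamma>+1)*(1+c) + \<gamma> \<noteq> 0"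
  proof -
    have eq: "(\<gamma>+1)*(1+c) + \<gamma> = (\<gamma> + 1) * (c+\<gamma>)" by (simp add: ns)
    show ?thesis unfolding eq using fnz by simp
  qed
  have nX2: "\<gamma>*(1+c) + \<gamma> \<noteq> 0"
  proof -
    have eq: "\<gamma>*(1+c) + \<gamma> = (\<gamma>) * c" by (simp add: ns)
    show ?thesis unfolding eq using fnz by simp
  qed
  have nP2: "c*\<gamma>*(1+c) + \<gamma>*(1 + (\<gamma>+1)*c) \<noteq> 0"
  proof -
    have eq: "c*\<gamma>*(1+c) + \<gamma>*(1 + (\<gamma>+1)*c) = (\<gamma>)*(c^2 + \<gamma>*c + \<gamma>) + (1)" by (simp add: ns)
    show ?thesis unfolding eq using fnz hE by simp
  qed
  have nQ2: "c*\<gamma>*(1+c) + ((\<gamma>+1)*(1+c) + \<gamma>)*(1 + (\<gamma>+1)*c) \<noteq> 0"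
  proof -
    have eq: "c*\<gamma>*(1+c) + ((\<gamma>+1)*(1+c) + \<gamma>)*(1 + (\<gamma>+1)*c) = (\<gamma>) * (c+\<gamma>+1)" by (simp add: ns)
    show ?thesis unfolding eq using fnz by simp
  qed
  have nR: "c*\<gamma>*(1+c) + \<gamma>*(1+c)*(1 + (\<gamma>+1)*c) \<noteq> 0"
  proof -
    have eq: "c*\<gamma>*(1+c) + \<gamma>*(1+c)*(1 + (\<gamma>+1)*c) = (\<gamma> + 1) * (c+1) * (c+\<gamma>+1)" by (simp add: ns)
    show ?thesis unfolding eq using fnz by simp
  qed

  have nA: "(\<gamma>+1)*(1+c) \<noteq> 0" using nA0 by simp
  have nX: "\<gamma>*(1+c) \<noteq> 0" using nX0 by simp
  have nQ: "c*\<gamma>*(1+c) + (\<gamma>+1)*(1+c)*(1 + (\<gamma>+1)*c) \<noteq> 0" using nQ0 by simp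
  have idX: "\<gamma>*(1+c) + (\<gamma>+1)*(1+c) = 1 + c" by (simp add: ns)
  have id1: "inverse (1+c) + c*inverse (\<gamma>*(1+c)) = 1 + c*inverse ((\<gamma>+1)*(1+c))"
  proof (rule inv_id3[where da="1+c" and db="\<gamma>*(1+c)" and dc="(\<gamma>+1)*(1+c)"])
    show "inverse (1+c) * (1+c) = 1" by (rule left_inverse) (fact fnz3)
    show "inverse (\<gamma>*(1+c)) * (\<gamma>*(1+c)) = 1" by (rule left_inverse) (fact nX)
    show "inverse ((\<gamma>+1)*(1+c)) * ((\<gamma>+1)*(1+c)) = 1" by (rule left_inverse) (fact nA)
    show "(1+c)*(\<gamma>*(1+c))*((\<gamma>+1)*(1+c)) \<noteq> 0" using fnz3 nX nA by simp
    show "(inverse (1+c) + c*inverse (\<gamma>*(1+c)) + (1 + c*inverse ((\<gamma>+1)*(1+c))))*((1+c)*(\<gamma>*(1+c))*((\<gamma>+1)*(1+c))) = (\<gamma>*(1+c))*((\<gamma>+1)*(1+c))*(inverse (1+c)*(1+c)+1) + c*(1+c)*((\<gamma>+1)*(1+c))*(inverse (\<gamma>*(1+c))*(\<gamma>*(1+c))+1) + c*(1+c)*(\<gamma>*(1+c))*(inverse ((\<gamma>+1)*(1+c))*((\<gamma>+1)*(1+c))+1)"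
      by (simp add: ns)
  qed
  have id2: "(1 + (\<gamma>+1)*c)*inverse (c*\<gamma>*(1+c) + (\<gamma>+1)*(1+c)*(1 + (\<gamma>+1)*c)) + c*((1 + (\<gamma>+1)*c)*inverse (c*\<gamma>*(1+c))) = 1 + c*inverse ((\<gamma>+1)*(1+c))"
  proof (rule inv_id3[where da="c*\<gamma>*(1+c) + (\<gamma>+1)*(1+c)*(1 + (\<gamma>+1)*c)" and db="c*\<gamma>*(1+c)" and dc="(\<gamma>+1)*(1+c)"])
    show "inverse (c*\<gamma>*(1+c) + (\<gamma>+1)*(1+c)*(1 + (\<gamma>+1)*c)) * (c*\<gamma>*(1+c) + (\<gamma>+1)*(1+c)*(1 + (\<gamma>+1)*c)) = 1" by (rule left_inverse) (fact nQ)
    show "inverse (c*\<gamma>*(1+c)) * (c*\<gamma>*(1+c)) = 1" by (rule left_inverse) (fact nN)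
    show "inverse ((\<gamma>+1)*(1+c)) * ((\<gamma>+1)*(1+c)) = 1" by (rule left_inverse) (fact nA)
    show "(c*\<gamma>*(1+c) + (\<gamma>+1)*(1+c)*(1 + (\<gamma>+1)*c))*(c*\<gamma>*(1+c))*((\<gamma>+1)*(1+c)) \<noteq> 0" using nQ nN nA by simp
    show "((1 + (\<gamma>+1)*c)*inverse (c*\<gamma>*(1+c) + (\<gamma>+1)*(1+c)*(1 + (\<gamma>+1)*c)) + c*((1 + (\<gamma>+1)*c)*inverse (c*\<gamma>*(1+c))) + (1 + c*inverse ((\<gamma>+1)*(1+c))))*((c*\<gamma>*(1+c) + (\<gamma>+1)*(1+c)*(1 + (\<gamma>+1)*c))*(c*\<gamma>*(1+c))*((\<gamma>+1)*(1+c))) = (1 + (\<gamma>+1)*c)*(c*\<gamma>*(1+c))*((\<gamma>+1)*(1+c))*(inverse (c*\<gamma>*(1+c) + (\<gamma>+1)*(1+c)*(1 + (\<gamma>+1)*c))*(c*\<gamma>*(1+c) + (\<gamma>+1)*(1+c)*(1 + (\<gamma>+1)*c))+1) + c*(1 + (\<gamma>+1)*c)*(c*\<gamma>*(1+c) + (\<gamma>+1)*(1+c)*(1 + (\<gamma>+1)*c))*((\<gamma>+1)*(1+c))*(inverse (c*\<gamma>*(1+c))*(c*\<gamma>*(1+c))+1) + c*(c*\<gamma>*(1+c) + (\<gamma>+1)*(1+c)*(1 + (\<gamma>+1)*c))*(c*\<gamma>*(1+c))*(inverse ((\<gamma>+1)*(1+c))*((\<gamma>+1)*(1+c))+1)"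
      by (simp add: ns)
  qed
  show ?thesis
    by (rule lower_core[OF nA0 nA1 nA2 nX0 nX1 nX2 nD nN nP0 nP1 nP2 nQ0 nQ1 nQ2 nR idX id1 id2])
qed


lemma delta_eq: "cDelta (invCycle \<gamma>) c a b = card {x. G a x = b}"
  unfolding cDelta_def G_def by simp

lemma bound4: "cDelta (invCycle \<gamma>) c a b \<le> 4"
proof -
  let ?X = "{x. G a x = b}"
  have sp: "card ?X \<le> card (?X \<inter> Sp a) + card (?X - Sp a)" by (rule card_split)
  show ?thesis
  proof (cases "a = 0")
    case True thus ?thesis using a0_le1[of b] delta_eq by simp
  next
    case False
    have g2: "card (?X - Sp a) \<le> 2" by (rule gen_le2[OF False])
    show ?thesis
    proof (cases "a \<in> {1,\<gamma>,\<gamma>+1}")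
      case True thus ?thesis using spec_F4[OF True, of b] sp g2 delta_eq by simp
    next
      case F2: False
      hence "a \<notin> {0,1,\<gamma>,\<gamma>+1}" using False by simp
      thus ?thesis using spec_gen[of a b] sp g2 delta_eq by simp
    qed
  qed
qed

lemma bound3:
  assumes T0: "tr n (c * \<gamma>) = 1" and T1: "tr n (c * \<gamma>^2) = 1"
    and T2: "tr n (inverse c * \<gamma>) = 1" and T3: "tr n (inverse c * \<gamma>^2) = 1"
    and T4: "tr n (c / (c + \<gamma>)^2) = 1" and T5: "tr n (c * \<gamma>^2 / (c + \<gamma>)^2) = 1"
    and T6: "tr n (c * \<gamma> / (c + \<gamma>^2)^2) = 1" and T7: "tr n (c / (c + \<gamma>^2)^2) = 1"
  shows "cDelta (invCycle \<gamma>) c a b \<le> 3"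
proof -
  let ?X = "{x. G a x = b}"
  have sp: "card ?X \<le> card (?X \<inter> Sp a) + card (?X - Sp a)" by (rule card_split)
  show ?thesis
  proof (cases "a = 0")
    case True thus ?thesis using a0_le1[of b] delta_eq by simp
  next
    case False
    have g2: "card (?X - Sp a) \<le> 2" by (rule gen_le2[OF False])
    show ?thesis
    proof (cases "a \<in> {1,\<gamma>,\<gamma>+1}")
      case True thus ?thesis using spec_F4[OF True, of b] sp g2 delta_eq by simp
    next
      case F2: False
      hence na: "a \<notin> {0,1,\<gamma>,\<gamma>+1}" using False by simp
      show ?thesis using spec_tr[OF assms na, of b] sp g2 delta_eq by simp
    qed
  qed
qed

lemma lower3: "\<exists>a b. 3 \<le> cDelta (invCycle \<gamma>) c a b"
proof (cases "c^2 + \<gamma>*c + \<gamma> = 0")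
  case True thus ?thesis using lower_eq delta_eq by metis
next
  case False thus ?thesis using lower_ne delta_eq by metis
qed

end

lemma char2_basic:
  fixes x :: "'a::field"
  assumes "(2::'a) = 0"
  shows "- x = x" "x + x = 0"
proof -
  show "x + x = 0" by (metis assms mult_2 mult_zero_left)
  thus "- x = x" by (rule minus_unique)
qed

lemma two_of_card:
  assumes "card (UNIV :: 'a::{field,finite} set) = 2 ^ n" "n \<ge> 1"
  shows "(2::'a) = 0"
proof -
  have pos: "CHAR('a) > 0" by (rule finite_imp_CHAR_pos) simp
  have pr: "prime CHAR('a)" by (rule prime_CHAR_semidom[OF pos])
  have "CHAR('a) dvd 2 ^ n" using CHAR_dvd_CARD[where 'a='a] assms(1) by simp
  hence "CHAR('a) dvd 2" using pr prime_dvd_power by blast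
  hence "CHAR('a) = 2" using pr dvd_imp_le[of "CHAR('a)" 2] prime_gt_1_nat[of "CHAR('a)"] by force
  thus ?thesis using of_nat_CHAR[where 'a='a] by simp
qed

theorem mainTheorem11:
  fixes n :: nat and \<gamma> c :: "'a::{field,finite}"
  assumes "card (UNIV :: 'a set) = 2 ^ n" and "even n" and "n \<ge> 4"
    and "\<gamma> ^ 4 = \<gamma>" and "\<gamma> \<noteq> 0" and "\<gamma> \<noteq> 1"
    and "c ^ 4 \<noteq> c"
  shows "3 \<le> cDU (invCycle \<gamma>) c \<and> cDU (invCycle \<gamma>) c \<le> 4 \<and>
    ((tr n (c * \<gamma>) = 1 \<and> tr n (c * \<gamma>^2) = 1 \<and>
      tr n (inverse c * \<gamma>) = 1 \<and> tr n (inverse c * \<gamma>^2) = 1 \<and>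
      tr n (c / (c + \<gamma>)^2) = 1 \<and> tr n (c * \<gamma>^2 / (c + \<gamma>)^2) = 1 \<and>
      tr n (c * \<gamma> / (c + \<gamma>^2)^2) = 1 \<and> tr n (c / (c + \<gamma>^2)^2) = 1)
     \<longrightarrow> cDU (invCycle \<gamma>) c = 3)"
proof -
  have two: "(2::'a) = 0" by (rule two_of_card[OF assms(1)]) (use assms(3) in simp)
  note cb = char2_basic[OF two]
  have g3: "\<gamma>^3 = 1"
  proof -
    have "\<gamma> * (\<gamma>^3 - 1) = 0" using assms(4) by (simp add: algebra_simps power_Suc[symmetric] eval_nat_numeral)
    thus ?thesis using assms(5) by simp
  qed
  have gg: "\<gamma>*\<gamma> = \<gamma> + 1"
  proof -
    have "(\<gamma> - 1) * (\<gamma>*\<gamma> + \<gamma> + 1) = \<gamma>^3 - 1" by (simp add: algebra_simps eval_nat_numeral)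
    hence "(\<gamma> - 1) * (\<gamma>*\<gamma> + \<gamma> + 1) = 0" using g3 by simp
    hence "\<gamma>*\<gamma> + \<gamma> + 1 = 0" using assms(6) by simp
    hence "\<gamma>*\<gamma> = - (\<gamma> + 1)" by (intro eq_neg_iff_add_eq_0[THEN iffD2]) (simp add: add.assoc)
    thus ?thesis using cb(1) by simp
  qed
  have c0: "c \<noteq> 0" using assms(7) by auto
  have c1: "c \<noteq> 1" using assms(7) by auto
  have cg: "c \<noteq> \<gamma>" using assms(7,4) by auto
  have cg1: "c \<noteq> \<gamma> + 1"
  proof
    assume ceq: "c = \<gamma> + 1"
    have sq: "(\<gamma>+1)^2 = \<gamma>"
    proof -
      have "(\<gamma>+1)^2 = \<gamma>*\<gamma> + (\<gamma> + \<gamma>) + 1" by (simp add: algebra_simps power2_eq_square)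
      also have "\<dots> = \<gamma>" using gg cb(2)[of \<gamma>] cb(2)[of 1] by (simp add: add.assoc)
      finally show ?thesis .
    qed
    have "(\<gamma>+1)^4 = ((\<gamma>+1)^2)^2" by (simp flip: power_mult)
    also have "\<dots> = \<gamma>+1" using sq gg by (simp add: power2_eq_square)
    finally show False using assms(7) ceq by simp
  qed
  interpret L: c2field n \<gamma> c
    by unfold_locales (use assms two gg c0 c1 cg cg1 in auto)
  define M where "M = {cDelta (invCycle \<gamma>) c a b | a b. a \<noteq> 0 \<or> c \<noteq> 1}"
  have fin: "finite M"
  proof -
    have r: "cDelta (invCycle \<gamma>) c a b \<in> range (\<lambda>p. cDelta (invCycle \<gamma>) c (fst p) (snd p))" for a b
      using rangeI[of "\<lambda>p. cDelta (invCycle \<gamma>) c (fst p) (snd p)" "(a,b)"] by simp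
    have "M \<subseteq> (\<lambda>p. cDelta (invCycle \<gamma>) c (fst p) (snd p)) ` UNIV" unfolding M_def using r by blast
    thus ?thesis by (rule finite_subset) simp
  qed
  obtain a0 b0 where ab: "3 \<le> cDelta (invCycle \<gamma>) c a0 b0" using L.lower3 by blast
  have mem: "cDelta (invCycle \<gamma>) c a0 b0 \<in> M" unfolding M_def using c1 by blast
  hence ne: "M \<noteq> {}" by auto
  have lo: "3 \<le> Max M" using ab Max_ge[OF fin mem] by linarith
  have up: "Max M \<le> 4" using fin ne L.bound4 unfolding M_def by (auto simp: Max_le_iff)
  have tr3: "Max M \<le> 3" if T: "tr n (c * \<gamma>) = 1 \<and> tr n (c * \<gamma>^2) = 1 \<and>
      tr n (inverse c * \<gamma>) = 1 \<and> tr n (inverse c * \<gamma>^2) = 1 \<and>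
      tr n (c / (c + \<gamma>)^2) = 1 \<and> tr n (c * \<gamma>^2 / (c + \<gamma>)^2) = 1 \<and>
      tr n (c * \<gamma> / (c + \<gamma>^2)^2) = 1 \<and> tr n (c / (c + \<gamma>^2)^2) = 1"
  proof -
    have "\<forall>m\<in>M. m \<le> 3" unfolding M_def using T L.bound3 by auto
    thus ?thesis using fin ne by (simp add: Max_le_iff)
  qed
  have cdu: "cDU (invCycle \<gamma>) c = Max M" unfolding cDU_def M_def by simp
  show ?thesis unfolding cdu using lo up tr3 by auto
qed

end
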